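(* Let $G=H\oplus K$ be a $2$-sum or a $3$-sum of $2$-connected cubic graphs $H$ and $K$, where $H$ is a snark with $\pi(H)\ge 5$ and $K$ is $3$-edge-colourable. If $u$ is an apex of $H$ different from the distinguished vertex of $H$ for the $3$-sum (in the case of a $3$-sum), then $u$ is an apex of $G$.
   Context: Graphs are finite; loops and multiple edges are allowed. A snark is a $2$-connected cubic graph with no proper $3$-edge-colouring. The perfect matching index $\pi(G)$ is the smallest number of perfect matchings of $G$ whose union is $E(G)$. For a vertex $v$, $G^v$ denotes the graph obtained by inflating $v$ to a triangle (deleting $v$, adding a new triangle, and attaching the three edge-ends formerly at $v$ to its three distinct vertices). A vertex $v$ of a snark $G$ is an apex if $\pi(G^v)=4$. A $2$-sum with distinguished edges $e\in E(H)$, $f\in E(K)$ deletes $e,f$ and joins the $2$-valent vertices of $H-e$ to those of $K-f$ by two new independent edges. A $3$-sum with distinguished vertices $u'\in V(H)$, $v'\in V(K)$ deletes $u',v'$ and joins the three dangling edge-ends formerly at $u'$ bijectively to those formerly at $v'$. *)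

theory Defs
  imports Main "HOL-Library.Extended_Nat"
begin

text \<open>Finite multigraphs (loops and parallel edges allowed).  Every edge e has two
  ends, indexed by a boolean; endp e b is the vertex at end b of e.  A loop at v has
  both ends equal to v.\<close>

record ('v, 'e) mgraph =
  verts :: "'v set"
  edges :: "'e set"
  endp  :: "'e \<Rightarrow> bool \<Rightarrow> 'v"

definition wf_graph :: "('v, 'e) mgraph \<Rightarrow> bool" where
  "wf_graph G \<longleftrightarrow> finite (verts G) \<and> finite (edges G) \<and>
     (\<forall>e\<in>edges G. \<forall>b. endp G e b \<in> verts G)"

definition darts_at :: "('v, 'e) mgraph \<Rightarrow> 'v \<Rightarrow> ('e \<times> bool) set" where
  "darts_at G v = {(e, b). e \<in> edges G \<and> endp G e b = v}"

definition cubic :: "('v, 'e) mgraph \<Rightarrow> bool" where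
  "cubic G \<longleftrightarrow> (\<forall>v\<in>verts G. card (darts_at G v) = 3)"

definition adj_rel :: "('v, 'e) mgraph \<Rightarrow> ('v \<times> 'v) set" where
  "adj_rel G = {(u, w). \<exists>e\<in>edges G. (endp G e False = u \<and> endp G e True = w) \<or>
                                      (endp G e True = u \<and> endp G e False = w)}"

definition connected_graph :: "('v, 'e) mgraph \<Rightarrow> bool" where
  "connected_graph G \<longleftrightarrow> verts G \<noteq> {} \<and>
     (\<forall>u\<in>verts G. \<forall>w\<in>verts G. (u, w) \<in> (adj_rel G)\<^sup>*)"

definition delete_edge :: "('v, 'e) mgraph \<Rightarrow> 'e \<Rightarrow> ('v, 'e) mgraph" where
  "delete_edge G e = G\<lparr>edges := edges G - {e}\<rparr>"

text \<open>2-connected (for cubic graphs: connected and bridgeless).\<close>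
definition two_connected :: "('v, 'e) mgraph \<Rightarrow> bool" where
  "two_connected G \<longleftrightarrow> connected_graph G \<and>
     (\<forall>e\<in>edges G. connected_graph (delete_edge G e))"

text \<open>Proper 3-edge-colouring: the darts at each vertex receive distinct colours
  (so loops are never properly coloured).\<close>
definition three_edge_colourable :: "('v, 'e) mgraph \<Rightarrow> bool" where
  "three_edge_colourable G \<longleftrightarrow> (\<exists>c :: 'e \<Rightarrow> nat. (\<forall>e\<in>edges G. c e < 3) \<and>
     (\<forall>v\<in>verts G. inj_on (\<lambda>d. c (fst d)) (darts_at G v)))"

definition snark :: "('v, 'e) mgraph \<Rightarrow> bool" where
  "snark G \<longleftrightarrow> wf_graph G \<and> cubic G \<and> two_connected G \<and> \<not> three_edge_colourable G"

definition perfect_matching :: "('v, 'e) mgraph \<Rightarrow> 'e set \<Rightarrow> bool" where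
  "perfect_matching G M \<longleftrightarrow> M \<subseteq> edges G \<and>
     (\<forall>v\<in>verts G. card {d \<in> darts_at G v. fst d \<in> M} = 1)"

text \<open>Perfect matching index (infinity if no cover by perfect matchings exists).\<close>
definition pmi :: "('v, 'e) mgraph \<Rightarrow> enat" where
  "pmi G = Inf {enat (card S) | S. finite S \<and> (\<forall>M\<in>S. perfect_matching G M) \<and>
                                  \<Union>S = edges G}"

text \<open>Inflation of v to a triangle with vertices Inr 0, Inr 1, Inr 2 and triangle
  edges Inr i joining Inr i and Inr ((i+1) mod 3); f assigns the darts at v to the
  triangle vertices.\<close>
definition inflate :: "('v, 'e) mgraph \<Rightarrow> 'v \<Rightarrow> ('e \<times> bool \<Rightarrow> nat)
                         \<Rightarrow> ('v + nat, 'e + nat) mgraph" where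
  "inflate G v f = \<lparr> verts = Inl ` (verts G - {v}) \<union> Inr ` {0, 1, 2},
     edges = Inl ` edges G \<union> Inr ` {0, 1, 2},
     endp = (\<lambda>x b. case x of
               Inl e \<Rightarrow> (if endp G e b = v then Inr (f (e, b)) else Inl (endp G e b))
             | Inr i \<Rightarrow> Inr (if b then (i + 1) mod 3 else i)) \<rparr>"

definition apex :: "('v, 'e) mgraph \<Rightarrow> 'v \<Rightarrow> bool" where
  "apex G v \<longleftrightarrow> snark G \<and> v \<in> verts G \<and>
     (\<exists>f. bij_betw f (darts_at G v) {0, 1, 2} \<and> pmi (inflate G v f) = 4)"

text \<open>2-sum with distinguished edges e (of H) and f (of K).  The new edge Inr c joins
  end c of e to end (c = p) of f; the parameter p selects one of the two ways of
  pairing the 2-valent vertices.\<close>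
definition two_sum :: "('v1, 'e1) mgraph \<Rightarrow> ('v2, 'e2) mgraph \<Rightarrow> 'e1 \<Rightarrow> 'e2 \<Rightarrow> bool
                         \<Rightarrow> ('v1 + 'v2, ('e1 + 'e2) + bool) mgraph" where
  "two_sum H K e f p = \<lparr> verts = Inl ` verts H \<union> Inr ` verts K,
     edges = Inl ` Inl ` (edges H - {e}) \<union> Inl ` Inr ` (edges K - {f}) \<union> range Inr,
     endp = (\<lambda>x b. case x of
               Inl (Inl g) \<Rightarrow> Inl (endp H g b)
             | Inl (Inr g) \<Rightarrow> Inr (endp K g b)
             | Inr c \<Rightarrow> (if b then Inr (endp K f (c = p)) else Inl (endp H e c))) \<rparr>"

text \<open>The new edge Inr d (d a dart at u') joins
  the far end of the edge of d to the far end of the edge of sigma d.\<close>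
definition three_sum :: "('v1, 'e1) mgraph \<Rightarrow> ('v2, 'e2) mgraph \<Rightarrow> 'v1 \<Rightarrow> 'v2
                         \<Rightarrow> ('e1 \<times> bool \<Rightarrow> 'e2 \<times> bool)
                         \<Rightarrow> ('v1 + 'v2, ('e1 + 'e2) + ('e1 \<times> bool)) mgraph" where
  "three_sum H K u' v' \<sigma> = \<lparr> verts = Inl ` (verts H - {u'}) \<union> Inr ` (verts K - {v'}),
     edges = Inl ` Inl ` {g \<in> edges H. endp H g False \<noteq> u' \<and> endp H g True \<noteq> u'}
           \<union> Inl ` Inr ` {g \<in> edges K. endp K g False \<noteq> v' \<and> endp K g True \<noteq> v'}
           \<union> Inr ` darts_at H u',
     endp = (\<lambda>x b. case x of
               Inl (Inl g) \<Rightarrow> Inl (endp H g b)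
             | Inl (Inr g) \<Rightarrow> Inr (endp K g b)
             | Inr d \<Rightarrow> (if b then Inr (endp K (fst (\<sigma> d)) (\<not> snd (\<sigma> d)))
                         else Inl (endp H (fst d) (\<not> snd d)))) \<rparr>"

end

theory Submission
  imports Defs
begin

lemma card_transfer:
  assumes "bij_betw \<psi> A B" "\<And>a. a \<in> A \<Longrightarrow> P a \<longleftrightarrow> Q (\<psi> a)"
  shows "card {a\<in>A. P a} = card {b\<in>B. Q b}"
proof -
  have "bij_betw \<psi> {a\<in>A. P a} {b\<in>B. Q b}"
    using assms unfolding bij_betw_def inj_on_def by auto
  thus ?thesis by (rule bij_betw_same_card)
qed

lemma inj_transfer:
  assumes "bij_betw \<psi> A B" "\<And>a. a \<in> A \<Longrightarrow> c (\<psi> a) = c' a" "inj_on c' A"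
  shows "inj_on c B"
  using assms unfolding bij_betw_def inj_on_def by (smt (verit) imageE)

definition cross :: "('v, 'e) mgraph \<Rightarrow> 'v set \<Rightarrow> 'e set" where
  "cross G S = {g \<in> edges G. (endp G g False \<in> S) \<noteq> (endp G g True \<in> S)}"

lemma cross_delete: "cross (delete_edge G e) S = cross G S - {e}"
  by (auto simp: cross_def delete_edge_def)

lemma wf_delete: "wf_graph G \<Longrightarrow> wf_graph (delete_edge G e)"
  by (auto simp: wf_graph_def delete_edge_def)

lemma conn_cut:
  assumes wf: "wf_graph G"
  shows "connected_graph G \<longleftrightarrow> verts G \<noteq> {} \<and>
    (\<forall>S. S \<subseteq> verts G \<longrightarrow> S \<noteq> {} \<longrightarrow> S \<noteq> verts G \<longrightarrow> cross G S \<noteq> {})"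
proof
  assume c: "connected_graph G"
  show "verts G \<noteq> {} \<and> (\<forall>S. S \<subseteq> verts G \<longrightarrow> S \<noteq> {} \<longrightarrow> S \<noteq> verts G \<longrightarrow> cross G S \<noteq> {})"
  proof (intro conjI allI impI)
    show "verts G \<noteq> {}" using c by (simp add: connected_graph_def)
    fix S assume S: "S \<subseteq> verts G" "S \<noteq> {}" "S \<noteq> verts G"
    show "cross G S \<noteq> {}"
    proof
      assume cr: "cross G S = {}"
      obtain x where x: "x \<in> S" using S by auto
      obtain w where w: "w \<in> verts G" "w \<notin> S" using S by auto
      have r: "(x, w) \<in> (adj_rel G)\<^sup>*" using c x w S unfolding connected_graph_def by auto
      have "\<And>y. (x, y) \<in> (adj_rel G)\<^sup>* \<Longrightarrow> y \<in> S"
      proof -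
        fix y assume "(x, y) \<in> (adj_rel G)\<^sup>*"
        then show "y \<in> S"
        proof (induction rule: rtrancl_induct)
          case base then show ?case using x by simp
        next
          case (step y z)
          then obtain g where g: "g \<in> edges G" "(endp G g False = y \<and> endp G g True = z) \<or>
              (endp G g True = y \<and> endp G g False = z)" unfolding adj_rel_def by auto
          have "g \<notin> cross G S" using cr by auto
          then show ?case using g step.IH unfolding cross_def by auto
        qed
      qed
      with r w show False by auto
    qed
  qed
next
  assume h: "verts G \<noteq> {} \<and> (\<forall>S. S \<subseteq> verts G \<longrightarrow> S \<noteq> {} \<longrightarrow> S \<noteq> verts G \<longrightarrow> cross G S \<noteq> {})"
  show "connected_graph G" unfolding connected_graph_def
  proof (intro conjI ballI)
    show "verts G \<noteq> {}" using h by simp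
    fix u w assume u: "u \<in> verts G" and w: "w \<in> verts G"
    define S where "S = {x \<in> verts G. (u, x) \<in> (adj_rel G)\<^sup>*}"
    have "S = verts G"
    proof (rule ccontr)
      assume ne: "S \<noteq> verts G"
      have "u \<in> S" using u by (simp add: S_def)
      have "S \<subseteq> verts G" "S \<noteq> {}" using \<open>u \<in> S\<close> by (auto simp: S_def)
      then obtain g where g: "g \<in> cross G S" using h ne by blast
      then have ge: "g \<in> edges G" by (simp add: cross_def)
      then have ends: "endp G g False \<in> verts G" "endp G g True \<in> verts G"
        using wf by (auto simp: wf_graph_def)
      have a1: "(endp G g False, endp G g True) \<in> adj_rel G" "(endp G g True, endp G g False) \<in> adj_rel G"
        using ge unfolding adj_rel_def by auto
      show False
      proof (cases "endp G g False \<in> S")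
        case True
        then have "endp G g True \<notin> S" using g by (simp add: cross_def)
        moreover have "(u, endp G g True) \<in> (adj_rel G)\<^sup>*"
          using True a1 by (auto simp: S_def intro: rtrancl_into_rtrancl)
        ultimately show False using ends by (simp add: S_def)
      next
        case False
        then have "endp G g True \<in> S" using g by (simp add: cross_def)
        moreover have "(u, endp G g False) \<in> (adj_rel G)\<^sup>*"
          using calculation a1 by (auto simp: S_def intro: rtrancl_into_rtrancl)
        ultimately show False using ends False by (simp add: S_def)
      qed
    qed
    then show "(u, w) \<in> (adj_rel G)\<^sup>*" using w by (auto simp: S_def)
  qed
qed

lemma finite_cross: "wf_graph G \<Longrightarrow> finite (cross G S)"
  by (auto simp: wf_graph_def cross_def)

lemma two_conn_cut:
  assumes wf: "wf_graph G"
  shows "two_connected G \<longleftrightarrow> verts G \<noteq> {} \<and>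
    (\<forall>S. S \<subseteq> verts G \<longrightarrow> S \<noteq> {} \<longrightarrow> S \<noteq> verts G \<longrightarrow> 2 \<le> card (cross G S))"
proof
  assume t: "two_connected G"
  then have c: "connected_graph G" by (simp add: two_connected_def)
  show "verts G \<noteq> {} \<and> (\<forall>S. S \<subseteq> verts G \<longrightarrow> S \<noteq> {} \<longrightarrow> S \<noteq> verts G \<longrightarrow> 2 \<le> card (cross G S))"
  proof (intro conjI allI impI)
    show "verts G \<noteq> {}" using c by (simp add: connected_graph_def)
    fix S assume S: "S \<subseteq> verts G" "S \<noteq> {}" "S \<noteq> verts G"
    have "cross G S \<noteq> {}" using c S conn_cut[OF wf] by simp
    then obtain g where g: "g \<in> cross G S" by blast
    then have "g \<in> edges G" by (simp add: cross_def)
    then have "connected_graph (delete_edge G g)" using t by (simp add: two_connected_def)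
    moreover have "verts (delete_edge G g) = verts G" by (simp add: delete_edge_def)
    ultimately have "cross (delete_edge G g) S \<noteq> {}" using conn_cut[OF wf_delete[OF wf], of g] S
      by simp
    then have "cross G S - {g} \<noteq> {}" by (simp add: cross_delete)
    then obtain g' where "g' \<in> cross G S" "g' \<noteq> g" by auto
    then have "{g, g'} \<subseteq> cross G S" "card {g, g'} = 2" using g by auto
    then show "2 \<le> card (cross G S)" using card_mono[OF finite_cross[OF wf]] by metis
  qed
next
  assume h: "verts G \<noteq> {} \<and> (\<forall>S. S \<subseteq> verts G \<longrightarrow> S \<noteq> {} \<longrightarrow> S \<noteq> verts G \<longrightarrow> 2 \<le> card (cross G S))"
  have c: "connected_graph G"
  proof -
    have "cross G S \<noteq> {}" if "S \<subseteq> verts G" "S \<noteq> {}" "S \<noteq> verts G" for S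
    proof -
      have "2 \<le> card (cross G S)" using h that by blast
      then show ?thesis by auto
    qed
    then show ?thesis using h conn_cut[OF wf] by simp
  qed
  moreover have "connected_graph (delete_edge G e)" for e
  proof -
    have "cross G S - {e} \<noteq> {}" if "S \<subseteq> verts G" "S \<noteq> {}" "S \<noteq> verts G" for S
    proof
      assume "cross G S - {e} = {}"
      then have "cross G S \<subseteq> {e}" by auto
      then have "card (cross G S) \<le> card {e}" by (intro card_mono) auto
      moreover have "2 \<le> card (cross G S)" using h that by blast
      ultimately show False by simp
    qed
    then have "\<forall>S. S \<subseteq> verts (delete_edge G e) \<longrightarrow> S \<noteq> {} \<longrightarrow> S \<noteq> verts (delete_edge G e)
       \<longrightarrow> cross (delete_edge G e) S \<noteq> {}"
      by (simp add: cross_delete) (simp add: delete_edge_def)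
    moreover have "verts (delete_edge G e) \<noteq> {}" using h by (simp add: delete_edge_def)
    ultimately show ?thesis using conn_cut[OF wf_delete[OF wf], of e] by simp
  qed
  ultimately show "two_connected G" by (simp add: two_connected_def)
qed


definition inner :: "('v, 'e) mgraph \<Rightarrow> 'v set \<Rightarrow> 'e set" where
  "inner G S = {g \<in> edges G. endp G g False \<in> S \<and> endp G g True \<in> S}"

lemma finite_darts: "wf_graph G \<Longrightarrow> finite (darts_at G v)"
proof -
  assume "wf_graph G"
  then have "finite (edges G \<times> (UNIV :: bool set))" by (simp add: wf_graph_def)
  moreover have "darts_at G v \<subseteq> edges G \<times> UNIV" by (auto simp: darts_at_def)
  ultimately show ?thesis by (rule finite_subset[rotated])
qed

lemma parity:
  assumes wf: "wf_graph G" and pm: "perfect_matching G M" and S: "S \<subseteq> verts G"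
  shows "card S = 2 * card (M \<inter> inner G S) + card (M \<inter> cross G S)"
proof -
  have Me: "M \<subseteq> edges G" using pm by (simp add: perfect_matching_def)
  have finS: "finite S" using wf S finite_subset by (auto simp: wf_graph_def)
  have finM: "finite M" using wf Me finite_subset by (auto simp: wf_graph_def)
  define D where "D = {(g, b). g \<in> M \<and> endp G g b \<in> S}"
  have D1: "D = (\<Union>v\<in>S. {d \<in> darts_at G v. fst d \<in> M})"
    using Me by (auto simp: D_def darts_at_def)
  have "card D = (\<Sum>v\<in>S. card {d \<in> darts_at G v. fst d \<in> M})"
    unfolding D1 using finS finite_darts[OF wf]
    by (intro card_UN_disjoint) (auto simp: darts_at_def)
  also have "\<dots> = (\<Sum>v\<in>S. 1)"
    using pm S by (intro sum.cong) (auto simp: perfect_matching_def)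
  finally have cD: "card D = card S" by simp
  define C where "C = {(g, b). g \<in> M \<inter> cross G S \<and> endp G g b \<in> S}"
  have D2: "D = (M \<inter> inner G S) \<times> UNIV \<union> C"
    using Me apply (auto simp: D_def C_def inner_def cross_def)
    apply (case_tac b; auto)+
    done
  have disj: "(M \<inter> inner G S) \<times> UNIV \<inter> C = {}"
    by (auto simp: C_def inner_def cross_def)
  have "C \<subseteq> M \<times> UNIV" by (auto simp: C_def)
  moreover have "finite (M \<times> (UNIV :: bool set))" using finM by simp
  ultimately have finC: "finite C" by (rule finite_subset)
  have cC: "card C = card (M \<inter> cross G S)"
  proof -
    have "inj_on fst C" unfolding inj_on_def C_def cross_def
      apply auto
      apply (case_tac b; case_tac ba; auto)+
      done
    moreover have "fst ` C = M \<inter> cross G S"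
    proof
      show "fst ` C \<subseteq> M \<inter> cross G S" by (auto simp: C_def)
      show "M \<inter> cross G S \<subseteq> fst ` C"
      proof
        fix g assume g: "g \<in> M \<inter> cross G S"
        then have "(g, True) \<in> C \<or> (g, False) \<in> C" by (auto simp: C_def cross_def)
        then show "g \<in> fst ` C" by (metis fst_conv image_eqI)
      qed
    qed
    ultimately show ?thesis by (metis card_image)
  qed
  have "card D = card ((M \<inter> inner G S) \<times> (UNIV :: bool set)) + card C"
    unfolding D2 using finM finC disj by (intro card_Un_disjoint) auto
  also have "card ((M \<inter> inner G S) \<times> (UNIV :: bool set)) = 2 * card (M \<inter> inner G S)"
    by (simp add: card_cartesian_product)
  finally show ?thesis using cD cC by simp
qed

lemma dart_edge: "d \<in> darts_at G v \<Longrightarrow> fst d \<in> edges G \<and> endp G (fst d) (snd d) = v"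
  by (cases d) (simp add: darts_at_def)

definition colouring :: "('v, 'e) mgraph \<Rightarrow> ('e \<Rightarrow> nat) \<Rightarrow> bool" where
  "colouring G c \<longleftrightarrow> (\<forall>e\<in>edges G. c e < 3) \<and>
     (\<forall>v\<in>verts G. inj_on (\<lambda>d. c (fst d)) (darts_at G v))"

lemma tec_iff: "three_edge_colourable G \<longleftrightarrow> (\<exists>c. colouring G c)"
  by (simp add: three_edge_colourable_def colouring_def)

lemma colour_image:
  assumes cub: "cubic G" and col: "colouring G c" and v: "v \<in> verts G"
  shows "(\<lambda>d. c (fst d)) ` darts_at G v = {0, 1, 2}"
proof -
  have c3: "card (darts_at G v) = 3" using cub v by (simp add: cubic_def)
  then have fin: "finite (darts_at G v)" by (metis card.infinite zero_neq_numeral)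
  have inj: "inj_on (\<lambda>d. c (fst d)) (darts_at G v)" using col v by (simp add: colouring_def)
  have sub: "(\<lambda>d. c (fst d)) ` darts_at G v \<subseteq> {0, 1, 2}"
    using col by (auto simp: colouring_def darts_at_def)
  have "card ((\<lambda>d. c (fst d)) ` darts_at G v) = 3" using card_image[OF inj] c3 by simp
  then show ?thesis using sub by (intro card_subset_eq) auto
qed

lemma colour_class_pm:
  assumes cub: "cubic G" and col: "colouring G c" and j: "j < 3"
  shows "perfect_matching G {g \<in> edges G. c g = j}"
  unfolding perfect_matching_def
proof (intro conjI ballI)
  show "{g \<in> edges G. c g = j} \<subseteq> edges G" by auto
  fix v assume v: "v \<in> verts G"
  have "j \<in> (\<lambda>d. c (fst d)) ` darts_at G v" using colour_image[OF cub col v] j by auto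
  then obtain d0 where d0: "d0 \<in> darts_at G v" "c (fst d0) = j" by auto
  have inj: "inj_on (\<lambda>d. c (fst d)) (darts_at G v)" using col v by (simp add: colouring_def)
  have "{d \<in> darts_at G v. fst d \<in> {g \<in> edges G. c g = j}} = {d0}"
  proof (rule set_eqI, rule iffI)
    fix d assume "d \<in> {d \<in> darts_at G v. fst d \<in> {g \<in> edges G. c g = j}}"
    then show "d \<in> {d0}" using d0 inj_onD[OF inj] by auto
  next
    have "fst d0 \<in> edges G" using d0(1) by (cases d0) (simp add: darts_at_def)
    moreover fix d assume "d \<in> {d0}"
    ultimately show "d \<in> {d \<in> darts_at G v. fst d \<in> {g \<in> edges G. c g = j}}"
      using d0 by simp
  qed
  then show "card {d \<in> darts_at G v. fst d \<in> {g \<in> edges G. c g = j}} = 1" by simp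
qed

definition pmcover :: "('v, 'e) mgraph \<Rightarrow> 'e set set \<Rightarrow> bool" where
  "pmcover G S \<longleftrightarrow> finite S \<and> (\<forall>M\<in>S. perfect_matching G M) \<and> \<Union>S = edges G"

lemma pmi_le: "pmcover G S \<Longrightarrow> pmi G \<le> enat (card S)"
  unfolding pmi_def pmcover_def by (rule Inf_lower) auto

lemma pmi_ge:
  assumes h: "\<And>S. pmcover G S \<Longrightarrow> n \<le> card S" shows "enat n \<le> pmi G"
  unfolding pmi_def
proof (rule Inf_greatest)
  fix x assume "x \<in> {enat (card S) |S. finite S \<and> (\<forall>M\<in>S. perfect_matching G M) \<and> \<Union> S = edges G}"
  then obtain S where "x = enat (card S)" "pmcover G S" unfolding pmcover_def by blast
  then show "enat n \<le> x" using h by simp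
qed

lemma pmi_attained:
  assumes "pmi G = enat n" shows "\<exists>S. pmcover G S \<and> card S = n"
proof -
  define A where "A = {enat (card S) | S. finite S \<and> (\<forall>M\<in>S. perfect_matching G M) \<and> \<Union>S = edges G}"
  have pA: "pmi G = Inf A" by (simp add: pmi_def A_def)
  have "A \<noteq> {}" using assms pA by (auto simp: Inf_enat_def)
  then have "Inf A \<in> A" unfolding Inf_enat_def by (auto intro: LeastI)
  then show ?thesis using assms pA by (auto simp: A_def pmcover_def)
qed

lemma colourable_cover:
  assumes cub: "cubic G" and col: "colouring G c"
  shows "\<exists>S. pmcover G S \<and> card S \<le> 3"
proof -
  define S where "S = (\<lambda>j. {g \<in> edges G. c g = j}) ` {0, 1, 2::nat}"
  have "pmcover G S" unfolding pmcover_def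
  proof (intro conjI ballI)
    show "finite S" by (simp add: S_def)
    fix M assume "M \<in> S" then show "perfect_matching G M"
      using colour_class_pm[OF cub col] by (auto simp: S_def)
  next
    have cg: "c g \<in> {0, 1, 2}" if "g \<in> edges G" for g
      using col that unfolding colouring_def by auto
    show "\<Union>S = edges G"
    proof
      show "\<Union>S \<subseteq> edges G" by (auto simp: S_def)
      show "edges G \<subseteq> \<Union>S"
      proof
        fix g assume g: "g \<in> edges G"
        then have "g \<in> {g' \<in> edges G. c g' = c g}" by simp
        moreover have "c g \<in> {0, 1, 2}" using cg[OF g] .
        ultimately show "g \<in> \<Union>S" unfolding S_def by blast
      qed
    qed
  qed
  moreover have "card S \<le> 3" unfolding S_def
    by (rule order.trans[OF card_image_le]) auto
  ultimately show ?thesis by blast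
qed

lemma cover_colourable:
  assumes cov: "pmcover G S" and c3: "card S \<le> 3"
  shows "three_edge_colourable G"
proof -
  have finS: "finite S" using cov by (simp add: pmcover_def)
  obtain \<nu> where nu: "\<nu> ` S \<subseteq> {..<3::nat}" "inj_on \<nu> S"
    using card_le_inj[OF finS, of "{..<3::nat}"] c3 by auto
  define c where "c g = \<nu> (SOME M. M \<in> S \<and> g \<in> M)" for g
  have cs: "(SOME M. M \<in> S \<and> g \<in> M) \<in> S \<and> g \<in> (SOME M. M \<in> S \<and> g \<in> M)" if "g \<in> edges G" for g
  proof -
    have "\<exists>M. M \<in> S \<and> g \<in> M" using cov that unfolding pmcover_def by blast
    then show ?thesis by (rule someI_ex)
  qed
  have "colouring G c" unfolding colouring_def
  proof (intro conjI ballI)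
    fix e assume "e \<in> edges G"
    then have "(SOME M. M \<in> S \<and> e \<in> M) \<in> S" using cs by blast
    then show "c e < 3" using nu(1) unfolding c_def by blast
  next
    fix v assume v: "v \<in> verts G"
    show "inj_on (\<lambda>d. c (fst d)) (darts_at G v)"
    proof (rule inj_onI)
      fix d1 d2 assume d: "d1 \<in> darts_at G v" "d2 \<in> darts_at G v" "c (fst d1) = c (fst d2)"
      have e: "fst d1 \<in> edges G" "fst d2 \<in> edges G" using dart_edge[OF d(1)] dart_edge[OF d(2)] by simp_all
      let ?M = "SOME M. M \<in> S \<and> fst d1 \<in> M"
      have "(SOME M. M \<in> S \<and> fst d1 \<in> M) = (SOME M. M \<in> S \<and> fst d2 \<in> M)"
        using nu(2) d(3) cs[OF e(1)] cs[OF e(2)] unfolding c_def inj_on_def by blast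
      then have M: "?M \<in> S" "fst d1 \<in> ?M" "fst d2 \<in> ?M" using cs[OF e(1)] cs[OF e(2)] by auto
      then have "perfect_matching G ?M" using cov unfolding pmcover_def by blast
      then have "card {d \<in> darts_at G v. fst d \<in> ?M} = 1" using v unfolding perfect_matching_def by blast
      then obtain d0 where eq: "{d \<in> darts_at G v. fst d \<in> ?M} = {d0}" by (rule card_1_singletonE)
      have "d1 \<in> {d \<in> darts_at G v. fst d \<in> ?M}" "d2 \<in> {d \<in> darts_at G v. fst d \<in> ?M}"
        using d(1,2) M(2,3) by simp_all
      then show "d1 = d2" unfolding eq by simp
    qed
  qed
  then show ?thesis using tec_iff by blast
qed

lemma colouring_noloop:
  assumes "wf_graph G" "colouring G c" "g \<in> edges G"
  shows "endp G g False \<noteq> endp G g True"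
proof
  assume eq: "endp G g False = endp G g True"
  let ?v = "endp G g False"
  have "?v \<in> verts G" using assms by (simp add: wf_graph_def)
  then have inj: "inj_on (\<lambda>d. c (fst d)) (darts_at G ?v)" using assms by (simp add: colouring_def)
  have m: "(g, False) \<in> darts_at G ?v" "(g, True) \<in> darts_at G ?v"
    using assms eq by (auto simp: darts_at_def)
  have "(g, False) = (g, True)" using inj_onD[OF inj _ m] by simp
  then show False by simp
qed

lemma twoconn_noloop:
  assumes wf: "wf_graph G" and cub: "cubic G" and tc: "two_connected G" and g: "g \<in> edges G"
  shows "endp G g False \<noteq> endp G g True"
proof
  assume eq: "endp G g False = endp G g True"
  define v where "v = endp G g False"
  have v: "v \<in> verts G" using wf g by (simp add: wf_graph_def v_def)
  have c3: "card (darts_at G v) = 3" using cub v by (simp add: cubic_def)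
  have gd: "(g, False) \<in> darts_at G v" "(g, True) \<in> darts_at G v"
    using g eq by (auto simp: darts_at_def v_def)
  have "\<not> darts_at G v \<subseteq> {(g, False), (g, True)}"
  proof
    assume "darts_at G v \<subseteq> {(g, False), (g, True)}"
    then have "card (darts_at G v) \<le> card {(g, False), (g, True)}" by (intro card_mono) auto
    then show False using c3 by simp
  qed
  then obtain h b where hb: "(h, b) \<in> darts_at G v" "(h, b) \<notin> {(g, False), (g, True)}" by auto
  then have hg: "h \<noteq> g" by (cases b) auto
  have D: "darts_at G v = {(g, False), (g, True), (h, b)}"
  proof (rule sym, rule card_subset_eq)
    show "finite (darts_at G v)" using finite_darts[OF wf] .
    show "{(g, False), (g, True), (h, b)} \<subseteq> darts_at G v" using gd hb by auto
    show "card {(g, False), (g, True), (h, b)} = card (darts_at G v)" using c3 hg by simp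
  qed
  have h: "h \<in> edges G" "endp G h b = v" using hb by (auto simp: darts_at_def)
  have ne: "{v} \<noteq> verts G"
  proof
    assume vv: "{v} = verts G"
    have "endp G h (\<not> b) \<in> verts G" using wf h by (simp add: wf_graph_def)
    then have "(h, \<not> b) \<in> darts_at G v" using h vv by (auto simp: darts_at_def)
    then show False using D hg by auto
  qed
  have "cross G {v} \<subseteq> {h}"
  proof
    fix k assume k: "k \<in> cross G {v}"
    then have "k \<in> edges G" "endp G k False = v \<or> endp G k True = v"
      by (auto simp: cross_def)
    then have "(k, False) \<in> darts_at G v \<or> (k, True) \<in> darts_at G v"
      by (auto simp: darts_at_def)
    then have "k = g \<or> k = h" using D by auto
    moreover have "k \<noteq> g" using k eq by (auto simp: cross_def)
    ultimately show "k \<in> {h}" by simp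
  qed
  then have "card (cross G {v}) \<le> card {h}" by (intro card_mono) auto
  moreover have "2 \<le> card (cross G {v})"
  proof -
    have "\<forall>S. S \<subseteq> verts G \<longrightarrow> S \<noteq> {} \<longrightarrow> S \<noteq> verts G \<longrightarrow> 2 \<le> card (cross G S)"
      using conjunct2[OF iffD1[OF two_conn_cut[OF wf] tc]] .
    moreover have "{v} \<subseteq> verts G" using v by simp
    ultimately show ?thesis using ne by blast
  qed
  ultimately show False by simp
qed


lemma inflate_simps[simp]:
  "verts (inflate G v f) = Inl ` (verts G - {v}) \<union> Inr ` {0, 1, 2}"
  "edges (inflate G v f) = Inl ` edges G \<union> Inr ` {0, 1, 2}"
  "endp (inflate G v f) (Inl e) b = (if endp G e b = v then Inr (f (e, b)) else Inl (endp G e b))"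
  "endp (inflate G v f) (Inr i) b = Inr (if b then (i + 1) mod 3 else i)"
  by (simp_all add: inflate_def)

lemma wf_inflate:
  assumes wf: "wf_graph G" and f: "f ` darts_at G v \<subseteq> {0, 1, 2}"
  shows "wf_graph (inflate G v f)"
  unfolding wf_graph_def
proof (intro conjI ballI allI)
  show "finite (verts (inflate G v f))" "finite (edges (inflate G v f))"
    using wf by (simp_all add: wf_graph_def)
  fix x b assume x: "x \<in> edges (inflate G v f)"
  show "endp (inflate G v f) x b \<in> verts (inflate G v f)"
  proof (cases x)
    case (Inl e)
    then have e: "e \<in> edges G" using x by auto
    show ?thesis
    proof (cases "endp G e b = v")
      case True
      then have "(e, b) \<in> darts_at G v" using e by (simp add: darts_at_def)
      then have "f (e, b) \<in> {0, 1, 2}" using f by blast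
      then have "Inr (f (e, b)) \<in> Inl ` (verts G - {v}) \<union> Inr ` {0, 1, 2}" by blast
      then have "Inr (f (e, b)) \<in> verts (inflate G v f)" by (simp only: inflate_simps)
      then show ?thesis using Inl True by simp
    next
      case False
      then show ?thesis using Inl e wf by (simp add: wf_graph_def)
    qed
  next
    case (Inr i)
    then have "i \<in> {0, 1, 2}" using x by auto
    then show ?thesis using Inr by auto
  qed
qed

lemma darts_inflate_Inl:
  fixes G :: "('v, 'e) mgraph"
  assumes "x \<noteq> v"
  shows "darts_at (inflate G v f) (Inl x) = (\<lambda>(e, b). (Inl e, b)) ` darts_at G x"
proof (rule set_eqI)
  fix d :: "('e + nat) \<times> bool"
  obtain y b where d: "d = (y, b)" by (cases d)
  show "d \<in> darts_at (inflate G v f) (Inl x) \<longleftrightarrow> d \<in> (\<lambda>(e, b). (Inl e, b)) ` darts_at G x"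
    using assms unfolding d by (cases y) (auto simp: darts_at_def)
qed

lemma bij_fiber:
  assumes "bij_betw f A B" "j \<in> B"
  shows "{d \<in> A. f d = j} = {inv_into A f j}"
proof -
  have "inv_into A f j \<in> A" "f (inv_into A f j) = j"
    using assms by (auto simp: bij_betw_def inv_into_into f_inv_into_f)
  moreover have "d = inv_into A f j" if "d \<in> A" "f d = j" for d
    using assms that by (metis bij_betw_inv_into_left)
  ultimately show ?thesis by blast
qed

lemma darts_inflate_Inr:
  fixes G :: "('v, 'e) mgraph"
  assumes j: "j \<in> {0, 1, 2}" and f: "bij_betw f (darts_at G v) {0, 1, 2}"
  defines "d0 \<equiv> inv_into (darts_at G v) f j"
  shows "darts_at (inflate G v f) (Inr j) = {(Inl (fst d0), snd d0), (Inr j, False), (Inr ((j + 2) mod 3), True)}"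
proof -
  have fib: "{d \<in> darts_at G v. f d = j} = {d0}" unfolding d0_def by (rule bij_fiber[OF f j])
  show ?thesis
  proof (rule set_eqI)
    fix d :: "('e + nat) \<times> bool"
    obtain y b where d: "d = (y, b)" by (cases d)
    show "d \<in> darts_at (inflate G v f) (Inr j) \<longleftrightarrow> d \<in> {(Inl (fst d0), snd d0), (Inr j, False), (Inr ((j + 2) mod 3), True)}"
    proof (cases y)
      case (Inl e)
      have "(Inl e, b) \<in> darts_at (inflate G v f) (Inr j) \<longleftrightarrow> (e, b) \<in> {d \<in> darts_at G v. f d = j}"
        by (auto simp: darts_at_def)
      also have "\<dots> \<longleftrightarrow> (e, b) = d0" using fib by simp
      finally show ?thesis using d Inl by (cases d0) auto
    next
      case (Inr i)
      show ?thesis using j unfolding d Inr by (cases b; auto simp: darts_at_def; presburger?)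
    qed
  qed
qed

lemma inj3: "h a \<noteq> h b \<Longrightarrow> h a \<noteq> h c \<Longrightarrow> h b \<noteq> h c \<Longrightarrow> inj_on h {a, b, c}"
  by (auto simp: inj_on_def)

lemma cubic_inflate:
  assumes cub: "cubic G" and f: "bij_betw f (darts_at G v) {0, 1, 2}"
  shows "cubic (inflate G v f)"
  unfolding cubic_def
proof
  fix w assume w: "w \<in> verts (inflate G v f)"
  show "card (darts_at (inflate G v f) w) = 3"
  proof (cases w)
    case (Inl x)
    then have x: "x \<in> verts G" "x \<noteq> v" using w by auto
    have "inj_on (\<lambda>(e, b). (Inl e :: 'b + nat, b)) (darts_at G x)" by (auto simp: inj_on_def)
    then show ?thesis using darts_inflate_Inl[OF x(2)] cub x card_image
      by (metis Inl cubic_def)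
  next
    case (Inr j)
    then have j: "j \<in> {0, 1, 2}" using w by auto
    show ?thesis unfolding Inr darts_inflate_Inr[OF j f] using j by auto
  qed
qed

lemma colour_inflate:
  fixes G :: "('v, 'e) mgraph"
  assumes cub: "cubic G" and f: "bij_betw f (darts_at G v) {0, 1, 2}" and col: "colouring G c"
    and v: "v \<in> verts G"
  shows "three_edge_colourable (inflate G v f)"
proof -
  define g where "g = inv_into (darts_at G v) f"
  define p where "p j = c (fst (g j))" for j
  have gin: "g j \<in> darts_at G v" if "j \<in> {0, 1, 2}" for j
    using f that unfolding g_def by (metis bij_betw_def inv_into_into)
  have ginj: "g i = g j \<Longrightarrow> i \<in> {0,1,2} \<Longrightarrow> j \<in> {0,1,2} \<Longrightarrow> i = j" for i j
    using f unfolding g_def by (metis bij_betw_inv_into_right)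
  have injc: "inj_on (\<lambda>d. c (fst d)) (darts_at G v)" using col v by (simp add: colouring_def)
  have pinj: "p i \<noteq> p j" if "i \<in> {0,1,2}" "j \<in> {0,1,2}" "i \<noteq> j" for i j
  proof
    assume "p i = p j"
    then have "g i = g j" using inj_onD[OF injc _ gin[OF that(1)] gin[OF that(2)]] by (simp add: p_def)
    then have "i = j" using ginj that(1,2) by simp
    then show False using that(3) by simp
  qed
  have p3: "p j < 3" if "j \<in> {0,1,2}" for j
  proof -
    have "fst (g j) \<in> edges G" using dart_edge[OF gin[OF that]] by simp
    then show ?thesis using col by (simp add: p_def colouring_def)
  qed
  define c' where "c' x = (case x of Inl e \<Rightarrow> c e | Inr i \<Rightarrow> p ((i + 2) mod 3))" for x
  have "colouring (inflate G v f) c'" unfolding colouring_def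
  proof (intro conjI ballI)
    fix x assume "x \<in> edges (inflate G v f)"
    then show "c' x < 3" using col p3 by (auto simp: c'_def colouring_def)
  next
    fix w assume w: "w \<in> verts (inflate G v f)"
    show "inj_on (\<lambda>d. c' (fst d)) (darts_at (inflate G v f) w)"
    proof (cases w)
      case (Inl x)
      then have x: "x \<in> verts G" "x \<noteq> v" using w by auto
      have injx: "inj_on (\<lambda>d. c (fst d)) (darts_at G x)" using col x by (simp add: colouring_def)
      have bij: "bij_betw (\<lambda>(e, b). (Inl e :: 'e + nat, b)) (darts_at G x) ((\<lambda>(e, b). (Inl e, b)) ` darts_at G x)"
        by (rule bij_betw_imageI) (auto simp: inj_on_def)
      show ?thesis unfolding Inl darts_inflate_Inl[OF x(2)]
        by (rule inj_transfer[OF bij _ injx]) (simp add: c'_def split: prod.splits)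
    next
      case (Inr j)
      then have j: "j \<in> {0, 1, 2}" using w by auto
      have "inj_on (\<lambda>d. c' (fst d)) {(Inl (fst (g j)), snd (g j)), (Inr j, False), (Inr ((j + 2) mod 3), True)}"
        using j pinj[of 0 1] pinj[of 0 2] pinj[of 1 2] by (intro inj3) (auto simp: c'_def p_def[symmetric] numeral_2_eq_2[symmetric])
      then show ?thesis unfolding Inr darts_inflate_Inr[OF j f] g_def .
    qed
  qed
  then show ?thesis by (auto simp: tec_iff)
qed


lemma inj_transfer2:
  assumes "bij_betw \<Phi> A B" "\<And>a. a \<in> A \<Longrightarrow> c' a = c (\<Phi> a)" "inj_on c B"
  shows "inj_on c' A"
proof (rule inj_onI)
  fix x y assume "x \<in> A" "y \<in> A" "c' x = c' y"
  then have "c (\<Phi> x) = c (\<Phi> y)" "\<Phi> x \<in> B" "\<Phi> y \<in> B" using assms by (auto simp: bij_betw_def)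
  then have "\<Phi> x = \<Phi> y" using assms(3) by (simp add: inj_on_def)
  then show "x = y" using assms(1) \<open>x \<in> A\<close> \<open>y \<in> A\<close> by (simp add: bij_betw_def inj_on_def)
qed

lemma bij_image_L:
  assumes "inj L1" "inj L2" "bij_betw \<phi> A B" "\<And>a. a \<in> A \<Longrightarrow> \<Phi> (L1 a) = L2 (\<phi> a)"
  shows "bij_betw \<Phi> (L1 ` A) (L2 ` B)"
  unfolding bij_betw_def
proof
  show "inj_on \<Phi> (L1 ` A)"
  proof (rule inj_onI)
    fix x y assume "x \<in> L1 ` A" "y \<in> L1 ` A" "\<Phi> x = \<Phi> y"
    then obtain a1 a2 where a: "a1 \<in> A" "a2 \<in> A" "x = L1 a1" "y = L1 a2" "L2 (\<phi> a1) = L2 (\<phi> a2)"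
      using assms(4) by auto
    then have "\<phi> a1 = \<phi> a2" using injD[OF assms(2)] by blast
    then have "a1 = a2" using a(1,2) assms(3) unfolding bij_betw_def by (blast dest: inj_onD)
    then show "x = y" using a by simp
  qed
  show "\<Phi> ` L1 ` A = L2 ` B" using assms(3,4) by (force simp: bij_betw_def)
qed

definition Lft :: "'e \<times> bool \<Rightarrow> ('e + nat) \<times> bool" where
  "Lft d = (Inl (fst d), snd d)"

lemma inj_Lft: "inj Lft" by (auto simp: inj_on_def Lft_def prod_eq_iff)

lemma darts_inflate_Inl': "x \<noteq> v \<Longrightarrow> darts_at (inflate G v f) (Inl x) = Lft ` darts_at G x"
  unfolding darts_inflate_Inl Lft_def by (simp add: case_prod_beta')

definition Phi :: "('e1 \<times> bool \<Rightarrow> 'e2 \<times> bool) \<Rightarrow> ('e1 + nat) \<times> bool \<Rightarrow> ('e2 + nat) \<times> bool" where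
  "Phi \<phi> d = (case fst d of Inl g \<Rightarrow> Lft (\<phi> (g, snd d)) | Inr i \<Rightarrow> (Inr i, snd d))"

lemma Phi_Lft[simp]: "Phi \<phi> (Lft d) = Lft (\<phi> d)"
  by (simp add: Phi_def Lft_def)

lemma Phi_Inr[simp]: "Phi \<phi> (Inr i, b) = (Inr i, b)"
  by (simp add: Phi_def)

lemma Phi_Inl: "Phi \<phi> (Inl g, b) = Lft (\<phi> (g, b))"
  by (simp add: Phi_def)

lemma bij_3:
  assumes "\<Phi> ` A = B" "card A = 3" "card B = 3"
  shows "bij_betw \<Phi> A B"
proof -
  have "finite A" using assms(2) by (metis card.infinite zero_neq_numeral)
  then have "inj_on \<Phi> A" using assms by (intro eq_card_imp_inj_on) auto
  then show ?thesis using assms(1) by (simp add: bij_betw_def)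
qed

lemma inflate_transfer:
  fixes H :: "('v1, 'e1) mgraph" and G :: "('v2, 'e2) mgraph"
  assumes bijx: "\<And>x. x \<in> X \<Longrightarrow> bij_betw \<phi> (darts_at H x) (darts_at G (hv x))"
    and hvinj: "inj_on hv X" and u: "u \<in> X"
    and fH: "bij_betw fH (darts_at H u) {0, 1, 2}"
    and fG: "\<And>d. d \<in> darts_at H u \<Longrightarrow> fG (\<phi> d) = fH d"
  shows "bij_betw fG (darts_at G (hv u)) {0, 1, 2}"
    and "\<And>x. x \<in> X \<Longrightarrow> x \<noteq> u \<Longrightarrow>
          bij_betw (Phi \<phi>) (darts_at (inflate H u fH) (Inl x)) (darts_at (inflate G (hv u) fG) (Inl (hv x)))"
    and "\<And>j. j \<in> {0, 1, 2} \<Longrightarrow>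
          bij_betw (Phi \<phi>) (darts_at (inflate H u fH) (Inr j)) (darts_at (inflate G (hv u) fG) (Inr j))"
proof -
  have bu: "bij_betw \<phi> (darts_at H u) (darts_at G (hv u))" using bijx u .
  have "bij_betw (fG \<circ> \<phi>) (darts_at H u) {0, 1, 2}"
    using fH fG by (metis (mono_tags, lifting) bij_betw_cong comp_apply)
  then show fGb: "bij_betw fG (darts_at G (hv u)) {0, 1, 2}"
    using bij_betw_comp_iff[OF bu] by blast
  {
    fix x assume x: "x \<in> X" "x \<noteq> u"
    have "hv x \<noteq> hv u" using x u hvinj by (auto simp: inj_on_def)
    then show "bij_betw (Phi \<phi>) (darts_at (inflate H u fH) (Inl x)) (darts_at (inflate G (hv u) fG) (Inl (hv x)))"
      unfolding darts_inflate_Inl'[OF x(2)] darts_inflate_Inl'[OF \<open>hv x \<noteq> hv u\<close>]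
      using bij_image_L[OF inj_Lft inj_Lft bijx[OF x(1)], of "Phi \<phi>"] by simp
  }
  {
    fix j :: nat assume j: "j \<in> {0, 1, 2}"
    define dH where "dH = inv_into (darts_at H u) fH j"
    define dG where "dG = inv_into (darts_at G (hv u)) fG j"
    have dH: "dH \<in> darts_at H u" "fH dH = j"
      using fH j unfolding dH_def by (auto simp: bij_betw_def inv_into_into f_inv_into_f)
    have "\<phi> dH \<in> darts_at G (hv u)" using bu dH by (auto simp: bij_betw_def)
    moreover have "fG (\<phi> dH) = j" using fG dH by simp
    ultimately have dG: "dG = \<phi> dH" unfolding dG_def using fGb
      by (metis bij_betw_inv_into_left)
    have A: "darts_at (inflate H u fH) (Inr j) = {Lft dH, (Inr j, False), (Inr ((j + 2) mod 3), True)}"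
      unfolding darts_inflate_Inr[OF j fH] dH_def Lft_def ..
    have B: "darts_at (inflate G (hv u) fG) (Inr j) = {Lft dG, (Inr j, False), (Inr ((j + 2) mod 3), True)}"
      unfolding darts_inflate_Inr[OF j fGb] dG_def Lft_def ..
    have c3: "card {Lft d, (Inr j, False), (Inr ((j + 2) mod 3), True)} = 3" for d :: "'x \<times> bool"
      by (simp add: Lft_def)
    show "bij_betw (Phi \<phi>) (darts_at (inflate H u fH) (Inr j)) (darts_at (inflate G (hv u) fG) (Inr j))"
      unfolding A B by (rule bij_3) (simp add: dG, rule c3, rule c3)
  }
qed


lemma two_sum_simps[simp]:
  "verts (two_sum H K e f p) = Inl ` verts H \<union> Inr ` verts K"
  "edges (two_sum H K e f p) = Inl ` Inl ` (edges H - {e}) \<union> Inl ` Inr ` (edges K - {f}) \<union> range Inr"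
  "endp (two_sum H K e f p) (Inl (Inl g)) b = Inl (endp H g b)"
  "endp (two_sum H K e f p) (Inl (Inr k)) b = Inr (endp K k b)"
  "endp (two_sum H K e f p) (Inr c) b = (if b then Inr (endp K f (c = p)) else Inl (endp H e c))"
  by (simp_all add: two_sum_def)

lemma two_elems:
  assumes "2 \<le> card X" shows "\<exists>a b. a \<in> X \<and> b \<in> X \<and> a \<noteq> b"
proof -
  have fin: "finite X" using assms card.infinite by fastforce
  have "X \<noteq> {}" using assms by auto
  then obtain a where a: "a \<in> X" by auto
  have "card (X - {a}) \<ge> 1" using assms a fin by simp
  then have "X - {a} \<noteq> {}" by (metis card.empty not_one_le_zero)
  then obtain b where "b \<in> X - {a}" by auto
  then show ?thesis using a by auto
qed

lemma other_elem: "2 \<le> card X \<Longrightarrow> \<exists>a\<in>X. a \<noteq> e"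
proof -
  assume "2 \<le> card X"
  then obtain a b where "a \<in> X" "b \<in> X" "a \<noteq> b" using two_elems by blast
  then show ?thesis by (cases "a = e") auto
qed

lemma card2I: "finite X \<Longrightarrow> a \<in> X \<Longrightarrow> b \<in> X \<Longrightarrow> a \<noteq> b \<Longrightarrow> 2 \<le> card X"
proof -
  assume "finite X" "a \<in> X" "b \<in> X" "a \<noteq> b"
  then have "card {a, b} \<le> card X" by (intro card_mono) auto
  then show ?thesis using \<open>a \<noteq> b\<close> by simp
qed

lemma pm_two_darts:
  assumes "perfect_matching G M" "v \<in> verts G" "d1 \<in> darts_at G v" "d2 \<in> darts_at G v"
    "fst d1 \<in> M" "fst d2 \<in> M"
  shows "d1 = d2"
proof -
  have "card {d \<in> darts_at G v. fst d \<in> M} = 1" using assms by (simp add: perfect_matching_def)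
  then obtain d0 where eq: "{d \<in> darts_at G v. fst d \<in> M} = {d0}" by (rule card_1_singletonE)
  have "d1 \<in> {d \<in> darts_at G v. fst d \<in> M}" "d2 \<in> {d \<in> darts_at G v. fst d \<in> M}"
    using assms by simp_all
  then show ?thesis unfolding eq by simp
qed

lemma three_darts:
  assumes "card A = 3" "d \<in> A"
  shows "\<exists>d1 d2. d1 \<in> A \<and> d2 \<in> A \<and> d1 \<noteq> d2 \<and> d1 \<noteq> d \<and> d2 \<noteq> d"
proof -
  have "card (A - {d}) = 2" using assms by simp
  then show ?thesis using two_elems[of "A - {d}"] by auto
qed


locale TSum =
  fixes H :: "('v1, 'e1) mgraph" and K :: "('v2, 'e2) mgraph"
    and e :: 'e1 and f :: 'e2 and p :: bool
  assumes wfH: "wf_graph H" and cubH: "cubic H" and tcH: "two_connected H"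
    and wfK: "wf_graph K" and cubK: "cubic K" and tcK: "two_connected K"
    and e: "e \<in> edges H" and f: "f \<in> edges K"
begin

abbreviation "G \<equiv> two_sum H K e f p"

definition phiH :: "'e1 \<times> bool \<Rightarrow> (('e1 + 'e2) + bool) \<times> bool" where
  "phiH d = (if fst d = e then (Inr (snd d), False) else (Inl (Inl (fst d)), snd d))"

definition phiK :: "'e2 \<times> bool \<Rightarrow> (('e1 + 'e2) + bool) \<times> bool" where
  "phiK d = (if fst d = f then (Inr (snd d = p), True) else (Inl (Inr (fst d)), snd d))"

lemma inj_phiH: "inj phiH"
  unfolding inj_def phiH_def by (auto simp: prod_eq_iff split: if_splits)

lemma inj_phiK: "inj phiK"
  unfolding inj_def phiK_def by (auto simp: prod_eq_iff split: if_splits)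

lemma darts_G_H:
  assumes x: "x \<in> verts H"
  shows "darts_at G (Inl x) = phiH ` darts_at H x"
proof (rule set_eqI)
  fix d :: "(('e1 + 'e2) + bool) \<times> bool"
  obtain z b where d: "d = (z, b)" by (cases d)
  show "d \<in> darts_at G (Inl x) \<longleftrightarrow> d \<in> phiH ` darts_at H x"
  proof (cases z)
    case (Inl z1)
    show ?thesis
    proof (cases z1)
      case (Inl g)
      have "(Inl (Inl g), b) = phiH (g', b') \<longleftrightarrow> g' = g \<and> b' = b \<and> g \<noteq> e" for g' b'
        by (auto simp: phiH_def)
      then show ?thesis unfolding d \<open>z = Inl z1\<close> Inl
        by (auto simp: darts_at_def image_iff)
    next
      case (Inr k)
      have "(Inl (Inr k), b) \<noteq> phiH d'" for d' by (auto simp: phiH_def)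
      then show ?thesis unfolding d \<open>z = Inl z1\<close> Inr
        by (auto simp: darts_at_def image_iff)
    qed
  next
    case (Inr c)
    have "(Inr c, b) = phiH (g', b') \<longleftrightarrow> g' = e \<and> b' = c \<and> \<not> b" for g' b'
      by (auto simp: phiH_def)
    then show ?thesis unfolding d Inr using e
      by (auto simp: darts_at_def image_iff)
  qed
qed

lemma darts_G_K:
  assumes y: "y \<in> verts K"
  shows "darts_at G (Inr y) = phiK ` darts_at K y"
proof (rule set_eqI)
  fix d :: "(('e1 + 'e2) + bool) \<times> bool"
  obtain z b where d: "d = (z, b)" by (cases d)
  show "d \<in> darts_at G (Inr y) \<longleftrightarrow> d \<in> phiK ` darts_at K y"
  proof (cases z)
    case (Inl z1)
    show ?thesis
    proof (cases z1)
      case (Inr k)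
      have "(Inl (Inr k), b) = phiK (g', b') \<longleftrightarrow> g' = k \<and> b' = b \<and> k \<noteq> f" for g' b'
        by (auto simp: phiK_def)
      then show ?thesis unfolding d \<open>z = Inl z1\<close> Inr
        by (auto simp: darts_at_def image_iff)
    next
      case (Inl g)
      have "(Inl (Inl g), b) \<noteq> phiK d'" for d' by (auto simp: phiK_def)
      then show ?thesis unfolding d \<open>z = Inl z1\<close> Inl
        by (auto simp: darts_at_def image_iff)
    qed
  next
    case (Inr c)
    have L: "(Inr c, b) \<in> darts_at G (Inr y) \<longleftrightarrow> b \<and> endp K f (c = p) = y"
      by (simp add: darts_at_def)
    have pk: "phiK (f, c = p) = (Inr c, True)" by (simp add: phiK_def) (cases c; cases p; simp)
    have R: "(Inr c, b) \<in> phiK ` darts_at K y \<longleftrightarrow> b \<and> endp K f (c = p) = y"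
    proof
      assume "(Inr c, b) \<in> phiK ` darts_at K y"
      then obtain g' b' where gb: "(g', b') \<in> darts_at K y" "(Inr c, b) = phiK (g', b')" by auto
      then have "g' = f" "(b' = p) = c" "b" by (auto simp: phiK_def split: if_splits)
      then have "b' = (c = p)" by auto
      then show "b \<and> endp K f (c = p) = y" using gb \<open>g' = f\<close> \<open>b\<close> by (simp add: darts_at_def)
    next
      assume "b \<and> endp K f (c = p) = y"
      then have "(f, c = p) \<in> darts_at K y" "b" using f by (auto simp: darts_at_def)
      then show "(Inr c, b) \<in> phiK ` darts_at K y" using pk by (metis image_eqI)
    qed
    show ?thesis unfolding d Inr L R ..
  qed
qed

lemma bij_H: "x \<in> verts H \<Longrightarrow> bij_betw phiH (darts_at H x) (darts_at G (Inl x))"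
  using darts_G_H inj_phiH by (simp add: bij_betw_def inj_on_subset[OF inj_phiH])

lemma bij_K: "y \<in> verts K \<Longrightarrow> bij_betw phiK (darts_at K y) (darts_at G (Inr y))"
  using darts_G_K inj_phiK by (simp add: bij_betw_def inj_on_subset[OF inj_phiK])

lemma wfG: "wf_graph G"
  unfolding wf_graph_def
proof (intro conjI ballI allI)
  show "finite (verts G)" using wfH wfK by (simp add: wf_graph_def)
  show "finite (edges G)" using wfH wfK by (simp add: wf_graph_def)
  fix x b assume x: "x \<in> edges G"
  show "endp G x b \<in> verts G"
    using x wfH wfK e f unfolding wf_graph_def by auto
qed

lemma cubG: "cubic G"
  unfolding cubic_def
proof
  fix w assume "w \<in> verts G"
  then consider (H) x where "x \<in> verts H" "w = Inl x" | (K) y where "y \<in> verts K" "w = Inr y" by auto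
  then show "card (darts_at G w) = 3"
  proof cases
    case H then show ?thesis using bij_betw_same_card[OF bij_H[OF H(1)]] cubH by (simp add: cubic_def)
  next
    case K then show ?thesis using bij_betw_same_card[OF bij_K[OF K(1)]] cubK by (simp add: cubic_def)
  qed
qed

lemma tcG: "two_connected G"
  unfolding two_conn_cut[OF wfG]
proof (intro conjI allI impI)
  have "verts H \<noteq> {}" using tcH by (simp add: two_connected_def connected_graph_def)
  then show "verts G \<noteq> {}" by simp
  fix S assume S: "S \<subseteq> verts G" "S \<noteq> {}" "S \<noteq> verts G"
  define SH where "SH = {x \<in> verts H. Inl x \<in> S}"
  define SK where "SK = {y \<in> verts K. Inr y \<in> S}"
  have SHs: "SH \<subseteq> verts H" and SKs: "SK \<subseteq> verts K" by (auto simp: SH_def SK_def)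
  have finG: "finite (cross G S)" using finite_cross[OF wfG] .
  have hH: "2 \<le> card (cross H SH)" if "SH \<noteq> {}" "SH \<noteq> verts H"
    using conjunct2[OF iffD1[OF two_conn_cut[OF wfH] tcH]] SHs that by blast
  have hK: "2 \<le> card (cross K SK)" if "SK \<noteq> {}" "SK \<noteq> verts K"
    using conjunct2[OF iffD1[OF two_conn_cut[OF wfK] tcK]] SKs that by blast
  have endH: "endp H g b \<in> verts H" if "g \<in> edges H" for g b using wfH that by (simp add: wf_graph_def)
  have endK: "endp K g b \<in> verts K" if "g \<in> edges K" for g b using wfK that by (simp add: wf_graph_def)
  have cH: "Inl (Inl g) \<in> cross G S" if "g \<in> cross H SH" "g \<noteq> e" for g
  proof -
    have g: "g \<in> edges H" using that by (simp add: cross_def)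
    have "Inl (endp H g b) \<in> S \<longleftrightarrow> endp H g b \<in> SH" for b using endH[OF g] by (simp add: SH_def)
    then show ?thesis using that g by (simp add: cross_def)
  qed
  have cK: "Inl (Inr k) \<in> cross G S" if "k \<in> cross K SK" "k \<noteq> f" for k
  proof -
    have k: "k \<in> edges K" using that by (simp add: cross_def)
    have "Inr (endp K k b) \<in> S \<longleftrightarrow> endp K k b \<in> SK" for b using endK[OF k] by (simp add: SK_def)
    then show ?thesis using that k by (simp add: cross_def)
  qed
  have cN: "Inr c \<in> cross G S" if "(endp H e c \<in> SH) \<noteq> (endp K f (c = p) \<in> SK)" for c
  proof -
    have "Inl (endp H e c) \<in> S \<longleftrightarrow> endp H e c \<in> SH" using endH[OF e] by (simp add: SH_def)
    moreover have "Inr (endp K f (c = p)) \<in> S \<longleftrightarrow> endp K f (c = p) \<in> SK" using endK[OF f] by (simp add: SK_def)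
    ultimately show ?thesis using that by (simp add: cross_def)
  qed
  have eH: "\<exists>c0. endp H e c0 \<in> SH \<and> endp H e (\<not> c0) \<notin> SH" if "e \<in> cross H SH"
  proof (cases "endp H e False \<in> SH")
    case True then show ?thesis using that by (intro exI[of _ False]) (simp add: cross_def)
  next
    case False then show ?thesis using that by (intro exI[of _ True]) (simp add: cross_def)
  qed
  have eK: "\<exists>b0. endp K f b0 \<in> SK \<and> endp K f (\<not> b0) \<notin> SK" if "f \<in> cross K SK"
  proof (cases "endp K f False \<in> SK")
    case True then show ?thesis using that by (intro exI[of _ False]) (simp add: cross_def)
  next
    case False then show ?thesis using that by (intro exI[of _ True]) (simp add: cross_def)
  qed
  show "2 \<le> card (cross G S)"
  proof (cases "SH \<noteq> {} \<and> SH \<noteq> verts H")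
    case A: True
    obtain g1 where g1: "g1 \<in> cross H SH" "g1 \<noteq> e" using other_elem[OF hH] A by blast
    show ?thesis
    proof (cases "SK \<noteq> {} \<and> SK \<noteq> verts K")
      case True
      obtain k1 where k1: "k1 \<in> cross K SK" "k1 \<noteq> f" using other_elem[OF hK] True by blast
      show ?thesis by (rule card2I[OF finG cH[OF g1] cK[OF k1]]) simp
    next
      case KF: False
      show ?thesis
      proof (cases "e \<in> cross H SH")
        case False
        obtain a b where ab: "a \<in> cross H SH" "b \<in> cross H SH" "a \<noteq> b" using two_elems[OF hH] A by blast
        then have "a \<noteq> e" "b \<noteq> e" using False by auto
        then show ?thesis using card2I[OF finG cH[OF ab(1)] cH[OF ab(2)]] ab(3) by simp
      next
        case True
        obtain c0 where c0: "endp H e c0 \<in> SH" "endp H e (\<not> c0) \<notin> SH" using eH[OF True] by blast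
        have "\<exists>c. Inr c \<in> cross G S"
        proof (cases "SK = {}")
          case True then show ?thesis using cN[of c0] c0 by blast
        next
          case False
          then have "SK = verts K" using KF by blast
          then have "endp K f ((\<not> c0) = p) \<in> SK" using endK[OF f] by simp
          then show ?thesis using cN[of "\<not> c0"] c0 by blast
        qed
        then obtain c where "Inr c \<in> cross G S" by blast
        then show ?thesis using card2I[OF finG cH[OF g1]] by blast
      qed
    qed
  next
    case HF: False
    show ?thesis
    proof (cases "SK \<noteq> {} \<and> SK \<noteq> verts K")
      case B: True
      obtain k1 where k1: "k1 \<in> cross K SK" "k1 \<noteq> f" using other_elem[OF hK] B by blast
      show ?thesis
      proof (cases "f \<in> cross K SK")
        case False
        obtain a b where ab: "a \<in> cross K SK" "b \<in> cross K SK" "a \<noteq> b" using two_elems[OF hK] B by blast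
        then have "a \<noteq> f" "b \<noteq> f" using False by auto
        then show ?thesis using card2I[OF finG cK[OF ab(1)] cK[OF ab(2)]] ab(3) by simp
      next
        case True
        obtain b0 where b0: "endp K f b0 \<in> SK" "endp K f (\<not> b0) \<notin> SK" using eK[OF True] by blast
        have "\<exists>c. Inr c \<in> cross G S"
        proof (cases "SH = {}")
          case True
          have "((b0 = p) = p) = b0" by auto
          then show ?thesis using cN[of "b0 = p"] b0 True by auto
        next
          case False
          then have "SH = verts H" using HF by blast
          then have "endp H e ((\<not> b0) = p) \<in> SH" using endH[OF e] by simp
          moreover have "(((\<not> b0) = p) = p) = (\<not> b0)" by auto
          ultimately show ?thesis using cN[of "(\<not> b0) = p"] b0 by auto
        qed
        then obtain c where "Inr c \<in> cross G S" by blast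
        then show ?thesis using card2I[OF finG cK[OF k1]] by blast
      qed
    next
      case KF: False
      have "(SH = {} \<and> SK = verts K) \<or> (SH = verts H \<and> SK = {})"
      proof (rule ccontr)
        assume "\<not> ?thesis"
        then have "(SH = {} \<and> SK = {}) \<or> (SH = verts H \<and> SK = verts K)" using HF KF by blast
        then show False
        proof
          assume "SH = {} \<and> SK = {}"
          then have "S = {}" using S(1) by (auto simp: SH_def SK_def)
          then show False using S(2) by simp
        next
          assume "SH = verts H \<and> SK = verts K"
          then have "verts G \<subseteq> S" by (auto simp: SH_def SK_def)
          then have "S = verts G" using S(1) by (rule antisym[rotated])
          then show False using S(3) by simp
        qed
      qed
      then have "Inr True \<in> cross G S \<and> Inr False \<in> cross G S"
        using cN[of True] cN[of False] endH[OF e] endK[OF f] by auto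
      then show ?thesis using card2I[OF finG] by blast
    qed
  qed
qed

end

locale TSumA = TSum H K e f p
  for H :: "('v1, 'e1) mgraph" and K :: "('v2, 'e2) mgraph" and e f p +
  fixes u :: 'v1 and fH :: "'e1 \<times> bool \<Rightarrow> nat" and cK :: "'e2 \<Rightarrow> nat"
  assumes u: "u \<in> verts H" and fH: "bij_betw fH (darts_at H u) {0, 1, 2}"
    and pmiH: "pmi (inflate H u fH) = 4" and colK: "colouring K cK"
begin

definition psiH :: "(('e1 + 'e2) + bool) \<times> bool \<Rightarrow> 'e1 \<times> bool" where
  "psiH d = (case fst d of Inl (Inl g) \<Rightarrow> (g, snd d) | Inl (Inr k) \<Rightarrow> (e, snd d) | Inr c \<Rightarrow> (e, c))"

definition fG :: "(('e1 + 'e2) + bool) \<times> bool \<Rightarrow> nat" where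
  "fG d = fH (psiH d)"

abbreviation "Hu \<equiv> inflate H u fH"
abbreviation "Gu \<equiv> inflate G (Inl u) fG"

lemma fG_phi: "fG (phiH d) = fH d"
  by (cases d) (auto simp: fG_def psiH_def phiH_def)

lemma inj_Inl: "inj_on Inl X" by simp

lemmas transf = inflate_transfer[where \<phi> = phiH and hv = Inl and X = "verts H" and u = u and fH = fH
    and fG = fG, OF bij_H inj_Inl u fH fG_phi]

lemma fGb: "bij_betw fG (darts_at G (Inl u)) {0, 1, 2}" using transf(1) .

lemma TH: "x \<in> verts H \<Longrightarrow> x \<noteq> u \<Longrightarrow> bij_betw (Phi phiH) (darts_at Hu (Inl x)) (darts_at Gu (Inl (Inl x)))"
  using transf(2) by blast

lemma TJ: "j \<in> {0, 1, 2} \<Longrightarrow> bij_betw (Phi phiH) (darts_at Hu (Inr j)) (darts_at Gu (Inr j))"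
  using transf(3) by blast

lemma TK: "y \<in> verts K \<Longrightarrow> bij_betw (Lft \<circ> phiK) (darts_at K y) (darts_at Gu (Inl (Inr y)))"
proof -
  assume y: "y \<in> verts K"
  have "darts_at Gu (Inl (Inr y)) = Lft ` darts_at G (Inr y)" by (rule darts_inflate_Inl') simp
  also have "\<dots> = Lft ` phiK ` darts_at K y" using darts_G_K[OF y] by simp
  finally have "darts_at Gu (Inl (Inr y)) = (Lft \<circ> phiK) ` darts_at K y" by (simp add: image_comp)
  moreover have "inj (Lft \<circ> phiK)" using inj_Lft inj_phiK by (rule inj_compose)
  then have "inj_on (Lft \<circ> phiK) (darts_at K y)" by (rule inj_on_subset) simp
  ultimately show ?thesis by (simp add: bij_betw_def)
qed

lemma uG: "Inl u \<in> verts G" using u by simp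

lemma fG_sub: "fG ` darts_at G (Inl u) \<subseteq> {0, 1, 2}" using fGb by (simp add: bij_betw_def)
lemma fH_sub: "fH ` darts_at H u \<subseteq> {0, 1, 2}" using fH by (simp add: bij_betw_def)

lemma wfGu: "wf_graph Gu" using wf_inflate[OF wfG fG_sub] .
lemma cubGu: "cubic Gu" using cubic_inflate[OF cubG fGb] .
lemma wfHu: "wf_graph Hu" using wf_inflate[OF wfH fH_sub] .
lemma cubHu: "cubic Hu" using cubic_inflate[OF cubH fH] .

lemma verts_Gu_cases:
  assumes "w \<in> verts Gu"
  obtains (H) x where "x \<in> verts H" "x \<noteq> u" "w = Inl (Inl x)"
    | (K) y where "y \<in> verts K" "w = Inl (Inr y)"
    | (T) j where "j \<in> {0, 1, 2}" "w = Inr j"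
  using assms by auto

lemma verts_Hu_cases:
  assumes "w \<in> verts Hu"
  obtains (H) x where "x \<in> verts H" "x \<noteq> u" "w = Inl x"
    | (T) j where "j \<in> {0, 1, 2}" "w = Inr j"
  using assms by auto

lemma fst_Phi_Inl: "fst (Phi phiH (Inl g, b)) = Inl (if g = e then Inr b else Inl (Inl g))"
  by (simp add: Phi_def Lft_def phiH_def)

lemma fst_Phi_Inr: "fst (Phi phiH (Inr i, b)) = Inr i"
  by (simp add: Phi_def)

lemma even_K: "even (card (verts K))"
proof -
  have pm: "perfect_matching K {g \<in> edges K. cK g = 0}" using colour_class_pm[OF cubK colK] by simp
  have "cross K (verts K) = {}" using wfK by (auto simp: cross_def wf_graph_def)
  then show ?thesis using parity[OF wfK pm order_refl] by simp
qed

definition SK :: "(('v1 + 'v2) + nat) set" where "SK = Inl ` Inr ` verts K"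

lemma cross_Gu_SK: "cross Gu SK = {Inl (Inr False), Inl (Inr True)}"
proof (rule set_eqI)
  fix x
  show "x \<in> cross Gu SK \<longleftrightarrow> x \<in> {Inl (Inr False), Inl (Inr True)}"
  proof (cases x)
    case (Inr i)
    then show ?thesis by (auto simp: cross_def SK_def)
  next
    case (Inl z)
    show ?thesis
    proof (cases z)
      case (Inr c)
      have "endp H e c \<in> verts H" "endp K f (c = p) \<in> verts K" using wfH wfK e f by (auto simp: wf_graph_def)
      then show ?thesis using Inl Inr by (auto simp: cross_def SK_def)
    next
      case (Inl z1)
      show ?thesis
      proof (cases z1)
        case (Inl g)
        then show ?thesis using \<open>x = Inl z\<close> \<open>z = Inl z1\<close> by (auto simp: cross_def SK_def)
      next
        case (Inr k)
        have "k \<in> edges K \<Longrightarrow> endp K k b \<in> verts K" for b using wfK by (simp add: wf_graph_def)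
        then show ?thesis using \<open>x = Inl z\<close> \<open>z = Inl z1\<close> Inr by (auto simp: cross_def SK_def)
      qed
    qed
  qed
qed

lemma pm_new_edges:
  assumes pm: "perfect_matching Gu M"
  shows "Inl (Inr True) \<in> M \<longleftrightarrow> Inl (Inr False) \<in> M"
proof -
  have sub: "SK \<subseteq> verts Gu" by (auto simp: SK_def)
  have "card SK = card (verts K)" unfolding SK_def by (simp add: card_image inj_on_def)
  then have "even (2 * card (M \<inter> inner Gu SK) + card (M \<inter> cross Gu SK))"
    using parity[OF wfGu pm sub] even_K by simp
  then have "even (card (M \<inter> cross Gu SK))" by simp
  then show ?thesis unfolding cross_Gu_SK by (cases "Inl (Inr True) \<in> M"; cases "Inl (Inr False) \<in> M") auto
qed

lemma nocolHu: "\<not> three_edge_colourable Hu"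
proof
  assume "three_edge_colourable Hu"
  then obtain c where "colouring Hu c" by (auto simp: tec_iff)
  then obtain S where "pmcover Hu S" "card S \<le> 3" using colourable_cover[OF cubHu] by blast
  then have "pmi Hu \<le> 3" using pmi_le by (metis enat_ord_simps(1) order_trans numeral_eq_enat)
  then show False using pmiH by simp
qed

lemma nocolGu: "\<not> three_edge_colourable Gu"
proof
  assume "three_edge_colourable Gu"
  then obtain cG where col: "colouring Gu cG" by (auto simp: tec_iff)
  define j where "j = cG (Inl (Inr False))"
  have "Inr False \<in> edges G" unfolding two_sum_simps by (intro UnI2 rangeI)
  then have "Inl (Inr False) \<in> edges Gu" unfolding inflate_simps by (rule UnI1[OF imageI])
  moreover have col3: "\<And>x. x \<in> edges Gu \<Longrightarrow> cG x < 3" using col unfolding colouring_def by blast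
  ultimately have j3: "j < 3" unfolding j_def by blast
  have "perfect_matching Gu {g \<in> edges Gu. cG g = j}" using colour_class_pm[OF cubGu col j3] .
  moreover have "Inl (Inr False) \<in> {g \<in> edges Gu. cG g = j}"
    using \<open>Inl (Inr False) \<in> edges Gu\<close> j_def by blast
  ultimately have "Inl (Inr True) \<in> {g \<in> edges Gu. cG g = j}" using pm_new_edges by blast
  then have eqc: "cG (Inl (Inr True)) = cG (Inl (Inr False))" unfolding j_def by blast
  define cH where "cH x = cG (fst (Phi phiH (x, False)))" for x
  have key: "cH x = cG (fst (Phi phiH (x, b)))" for x b
  proof (cases x)
    case (Inl g) then show ?thesis using eqc by (cases b) (simp_all add: cH_def fst_Phi_Inl)
  next
    case (Inr i) then show ?thesis by (simp add: cH_def fst_Phi_Inr)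
  qed
  have "colouring Hu cH" unfolding colouring_def
  proof (intro conjI ballI)
    fix x assume x: "x \<in> edges Hu"
    have "fst (Phi phiH (x, False)) \<in> edges Gu"
    proof (cases x)
      case (Inl g) then show ?thesis using x e by (auto simp: fst_Phi_Inl)
    next
      case (Inr i) then show ?thesis using x by (auto simp: fst_Phi_Inr)
    qed
    then show "cH x < 3" using col3 by (simp add: cH_def)
  next
    fix w assume w: "w \<in> verts Hu"
    have injG: "inj_on (\<lambda>d. cG (fst d)) (darts_at Gu w')" if "w' \<in> verts Gu" for w'
      using col that unfolding colouring_def by blast
    have k2: "cH (fst d) = cG (fst (Phi phiH d))" for d using key[of "fst d" "snd d"] by simp
    from w show "inj_on (\<lambda>d. cH (fst d)) (darts_at Hu w)"
    proof (cases rule: verts_Hu_cases)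
      case (H x)
      have "Inl (Inl x) \<in> verts Gu" using H by auto
      then show ?thesis unfolding H(3) using inj_transfer2[OF TH[OF H(1,2)] k2 injG] by blast
    next
      case (T j)
      have "Inr j \<in> verts Gu" using T by auto
      then show ?thesis unfolding T(2) using inj_transfer2[OF TJ[OF T(1)] k2 injG] by blast
    qed
  qed
  then show False using nocolHu by (auto simp: tec_iff)
qed

end

lemma dart_in_edges: "d \<in> darts_at X w \<Longrightarrow> fst d \<in> edges X"
  by (cases d) (simp add: darts_at_def)

context TSumA
begin

definition memG :: "('e1 + nat) set \<Rightarrow> 'e2 set \<Rightarrow> ((('e1 + 'e2) + bool) + nat) \<Rightarrow> bool" where
  "memG M N x = (case x of Inl (Inl (Inl g)) \<Rightarrow> Inl g \<in> M | Inl (Inl (Inr k)) \<Rightarrow> k \<in> N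
     | Inl (Inr c) \<Rightarrow> Inl e \<in> M | Inr i \<Rightarrow> Inr i \<in> M)"

definition liftM :: "('e1 + nat) set \<Rightarrow> 'e2 set \<Rightarrow> ((('e1 + 'e2) + bool) + nat) set" where
  "liftM M N = {x \<in> edges Gu. memG M N x}"

lemma memG_Phi: "memG M N (fst (Phi phiH (x, b))) = (x \<in> M)"
  by (cases x) (auto simp: fst_Phi_Inl fst_Phi_Inr memG_def)

lemma memG_K: "memG M N (fst ((Lft \<circ> phiK) (k, b))) = (if k = f then Inl e \<in> M else k \<in> N)"
  by (simp add: Lft_def phiK_def memG_def)

lemma lift_pm:
  assumes M: "perfect_matching Hu M" and N: "perfect_matching K N" and eq: "Inl e \<in> M \<longleftrightarrow> f \<in> N"
  shows "perfect_matching Gu (liftM M N)"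
  unfolding perfect_matching_def
proof (intro conjI ballI)
  show "liftM M N \<subseteq> edges Gu" by (auto simp: liftM_def)
  fix w assume w: "w \<in> verts Gu"
  have memL: "fst d \<in> liftM M N \<longleftrightarrow> memG M N (fst d)" if "d \<in> darts_at Gu w" for d
    using dart_in_edges[OF that] by (simp add: liftM_def)
  from w show "card {d \<in> darts_at Gu w. fst d \<in> liftM M N} = 1"
  proof (cases rule: verts_Gu_cases)
    case (H x)
    have "card {a \<in> darts_at Hu (Inl x). fst a \<in> M} = card {d \<in> darts_at Gu w. fst d \<in> liftM M N}"
    proof (rule card_transfer[OF TH[OF H(1,2)], unfolded H(3)[symmetric]])
      fix a assume a: "a \<in> darts_at Hu (Inl x)"
      then have "Phi phiH a \<in> darts_at Gu w" using TH[OF H(1,2)] H(3) by (auto simp: bij_betw_def)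
      then show "fst a \<in> M \<longleftrightarrow> fst (Phi phiH a) \<in> liftM M N"
        using memL memG_Phi[of M N "fst a" "snd a"] by simp
    qed
    moreover have "Inl x \<in> verts Hu" using H by auto
    then have "card {a \<in> darts_at Hu (Inl x). fst a \<in> M} = 1" using M unfolding perfect_matching_def by blast
    ultimately show ?thesis by simp
  next
    case (T j)
    have "card {a \<in> darts_at Hu (Inr j). fst a \<in> M} = card {d \<in> darts_at Gu w. fst d \<in> liftM M N}"
    proof (rule card_transfer[OF TJ[OF T(1)], unfolded T(2)[symmetric]])
      fix a assume a: "a \<in> darts_at Hu (Inr j)"
      then have "Phi phiH a \<in> darts_at Gu w" using TJ[OF T(1)] T(2) by (auto simp: bij_betw_def)
      then show "fst a \<in> M \<longleftrightarrow> fst (Phi phiH a) \<in> liftM M N"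
        using memL memG_Phi[of M N "fst a" "snd a"] by simp
    qed
    moreover have "Inr j \<in> verts Hu" using T by auto
    then have "card {a \<in> darts_at Hu (Inr j). fst a \<in> M} = 1" using M unfolding perfect_matching_def by blast
    ultimately show ?thesis by simp
  next
    case (K y)
    have "card {a \<in> darts_at K y. fst a \<in> N} = card {d \<in> darts_at Gu w. fst d \<in> liftM M N}"
    proof (rule card_transfer[OF TK[OF K(1)], unfolded K(2)[symmetric]])
      fix a assume a: "a \<in> darts_at K y"
      then have "(Lft \<circ> phiK) a \<in> darts_at Gu w" using TK[OF K(1)] K(2) by (auto simp: bij_betw_def)
      then show "fst a \<in> N \<longleftrightarrow> fst ((Lft \<circ> phiK) a) \<in> liftM M N"
        using memL memG_K[of M N "fst a" "snd a"] eq by simp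
    qed
    moreover have "card {a \<in> darts_at K y. fst a \<in> N} = 1" using N K(1) unfolding perfect_matching_def by blast
    ultimately show ?thesis by simp
  qed
qed

lemma edges_Gu_cases:
  assumes "x \<in> edges Gu"
  obtains (H) g where "g \<in> edges H" "g \<noteq> e" "x = Inl (Inl (Inl g))"
    | (K) k where "k \<in> edges K" "k \<noteq> f" "x = Inl (Inl (Inr k))"
    | (N) c where "x = Inl (Inr c)"
    | (T) i where "i \<in> {0, 1, 2}" "x = Inr i"
  using assms by auto

lemma pmiGu: "pmi Gu = 4"
proof (rule antisym)
  show "4 \<le> pmi Gu"
  proof -
    have "4 \<le> card S" if "pmcover Gu S" for S
    proof (rule ccontr)
      assume "\<not> 4 \<le> card S"
      then have "card S \<le> 3" by simp
      then show False using cover_colourable[OF that] nocolGu by blast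
    qed
    then have "enat 4 \<le> pmi Gu" by (rule pmi_ge)
    then show ?thesis by (simp add: numeral_eq_enat)
  qed
next
  have "pmi Hu = enat 4" using pmiH by (simp add: numeral_eq_enat)
  then obtain SH where SH: "pmcover Hu SH" "card SH = 4" using pmi_attained by blast
  have SHpm: "\<And>M. M \<in> SH \<Longrightarrow> perfect_matching Hu M" and SHu: "\<Union>SH = edges Hu" and SHf: "finite SH"
    using SH(1) by (auto simp: pmcover_def)
  have eHu: "Inl e \<in> edges Hu" using e by simp
  define x0 where "x0 = endp Hu (Inl e) False"
  have x0: "x0 \<in> verts Hu" using wfHu eHu unfolding x0_def wf_graph_def by blast
  have de: "(Inl e, False) \<in> darts_at Hu x0" using eHu by (simp add: x0_def darts_at_def)
  have c3: "card (darts_at Hu x0) = 3" using cubHu x0 unfolding cubic_def by blast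
  obtain d1 d2 where d12: "d1 \<in> darts_at Hu x0" "d2 \<in> darts_at Hu x0" "d1 \<noteq> d2"
    "d1 \<noteq> (Inl e, False)" "d2 \<noteq> (Inl e, False)" using three_darts[OF c3 de] by blast
  have covd: "\<exists>M\<in>SH. fst d \<in> M \<and> Inl e \<notin> M" if "d \<in> darts_at Hu x0" "d \<noteq> (Inl e, False)" for d
  proof -
    have "fst d \<in> edges Hu" using dart_in_edges[OF that(1)] .
    then obtain M where M: "M \<in> SH" "fst d \<in> M" using SHu by blast
    have "Inl e \<notin> M"
    proof
      assume "Inl e \<in> M"
      then have "d = (Inl e, False)" using pm_two_darts[OF SHpm[OF M(1)] x0 that(1) de M(2)] by simp
      then show False using that(2) by simp
    qed
    then show ?thesis using M by blast
  qed
  obtain Ma where Ma: "Ma \<in> SH" "fst d1 \<in> Ma" "Inl e \<notin> Ma" using covd[OF d12(1) d12(4)] by blast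
  obtain Mb where Mb: "Mb \<in> SH" "fst d2 \<in> Mb" "Inl e \<notin> Mb" using covd[OF d12(2) d12(5)] by blast
  have MaMb: "Ma \<noteq> Mb"
  proof
    assume "Ma = Mb"
    then have "d1 = d2" using pm_two_darts[OF SHpm[OF Ma(1)] x0 d12(1) d12(2) Ma(2)] Mb(2) by simp
    then show False using d12(3) by simp
  qed
  obtain Me where Me: "Me \<in> SH" "Inl e \<in> Me" using eHu SHu by blast
  define jf where "jf = cK f"
  have jf3: "jf < 3" using colK f unfolding colouring_def jf_def by blast
  define j1 where "j1 = (jf + 1) mod 3"
  define j2 where "j2 = (jf + 2) mod 3"
  have j12: "j1 < 3" "j2 < 3" "j1 \<noteq> jf" "j2 \<noteq> jf" "j1 \<noteq> j2"
    using jf3 unfolding j1_def j2_def by presburger+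
  have jall: "t = jf \<or> t = j1 \<or> t = j2" if "t < 3" for t
    using jf3 that unfolding j1_def j2_def by presburger
  define \<alpha> where "\<alpha> M = (if Inl e \<in> M then jf else if M = Mb then j2 else j1)" for M
  define NK where "NK j = {k \<in> edges K. cK k = j}" for j
  define SG where "SG = (\<lambda>M. liftM M (NK (\<alpha> M))) ` SH"
  have a3: "\<alpha> M < 3" for M using jf3 j12 by (simp add: \<alpha>_def)
  have NKpm: "perfect_matching K (NK j)" if "j < 3" for j
    unfolding NK_def using colour_class_pm[OF cubK colK that] .
  have aeq: "Inl e \<in> M \<longleftrightarrow> f \<in> NK (\<alpha> M)" for M
    using f j12 by (auto simp: \<alpha>_def NK_def jf_def)
  have cov: "pmcover Gu SG" unfolding pmcover_def
  proof (intro conjI ballI)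
    show "finite SG" using SHf by (simp add: SG_def)
    fix M' assume "M' \<in> SG"
    then obtain M where "M \<in> SH" "M' = liftM M (NK (\<alpha> M))" by (auto simp: SG_def)
    then show "perfect_matching Gu M'" using lift_pm[OF SHpm NKpm[OF a3] aeq] by simp
  next
    show "\<Union>SG = edges Gu"
    proof
      show "\<Union>SG \<subseteq> edges Gu" by (auto simp: SG_def liftM_def)
      show "edges Gu \<subseteq> \<Union>SG"
      proof
        fix x assume x: "x \<in> edges Gu"
        have inSG: "x \<in> \<Union>SG" if "M \<in> SH" "memG M (NK (\<alpha> M)) x" for M
          using that x unfolding SG_def liftM_def by blast
        from x show "x \<in> \<Union>SG"
        proof (cases rule: edges_Gu_cases)
          case (H g)
          then have "Inl g \<in> edges Hu" by simp
          then obtain M where "M \<in> SH" "Inl g \<in> M" using SHu by blast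
          then show ?thesis using inSG H(3) by (simp add: memG_def)
        next
          case (T i)
          then have "Inr i \<in> edges Hu" by auto
          then obtain M where "M \<in> SH" "Inr i \<in> M" using SHu by blast
          then show ?thesis using inSG T(2) by (simp add: memG_def)
        next
          case (N c)
          then show ?thesis using inSG[OF Me(1)] Me(2) by (simp add: memG_def)
        next
          case (K k)
          have t3: "cK k < 3" using colK K(1) unfolding colouring_def by blast
          have kN: "k \<in> NK (\<alpha> M)" if "\<alpha> M = cK k" for M using K(1) that by (simp add: NK_def)
          have "\<alpha> Me = jf" "\<alpha> Ma = j1" "\<alpha> Mb = j2" using Me Ma Mb MaMb by (auto simp: \<alpha>_def)
          then show ?thesis using jall[OF t3] inSG[OF Me(1)] inSG[OF Ma(1)] inSG[OF Mb(1)] kN K(3)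
            by (auto simp: memG_def)
        qed
      qed
    qed
  qed
  have "card SG \<le> 4" using SH(2) unfolding SG_def by (metis card_image_le[OF SHf])
  then have "pmi Gu \<le> enat 4" using pmi_le[OF cov] by (meson enat_ord_simps(1) order_trans)
  then show "pmi Gu \<le> 4" by (simp add: numeral_eq_enat)
qed

lemma apexG: "apex G (Inl u)"
proof -
  have "\<not> three_edge_colourable G"
  proof
    assume "three_edge_colourable G"
    then obtain c where "colouring G c" by (auto simp: tec_iff)
    then have "three_edge_colourable Gu" using colour_inflate[OF cubG fGb _ uG] by blast
    then show False using nocolGu by simp
  qed
  then have "snark G" using wfG cubG tcG by (simp add: snark_def)
  then show ?thesis unfolding apex_def using uG fGb pmiGu by blast
qed

end

lemma three_sum_simps[simp]:
  "verts (three_sum H K u' v' \<sigma>) = Inl ` (verts H - {u'}) \<union> Inr ` (verts K - {v'})"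
  "edges (three_sum H K u' v' \<sigma>) = Inl ` Inl ` {g \<in> edges H. endp H g False \<noteq> u' \<and> endp H g True \<noteq> u'}
           \<union> Inl ` Inr ` {g \<in> edges K. endp K g False \<noteq> v' \<and> endp K g True \<noteq> v'}
           \<union> Inr ` darts_at H u'"
  "endp (three_sum H K u' v' \<sigma>) (Inl (Inl g)) b = Inl (endp H g b)"
  "endp (three_sum H K u' v' \<sigma>) (Inl (Inr k)) b = Inr (endp K k b)"
  "endp (three_sum H K u' v' \<sigma>) (Inr d) b = (if b then Inr (endp K (fst (\<sigma> d)) (\<not> snd (\<sigma> d)))
                         else Inl (endp H (fst d) (\<not> snd d)))"
  by (simp_all add: three_sum_def)

locale ThSum =
  fixes H :: "('v1, 'e1) mgraph" and K :: "('v2, 'e2) mgraph"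
    and u' :: 'v1 and v' :: 'v2 and \<sigma> :: "'e1 \<times> bool \<Rightarrow> 'e2 \<times> bool"
  assumes wfH: "wf_graph H" and cubH: "cubic H" and tcH: "two_connected H"
    and wfK: "wf_graph K" and cubK: "cubic K" and tcK: "two_connected K"
    and u': "u' \<in> verts H" and v': "v' \<in> verts K"
    and sig: "bij_betw \<sigma> (darts_at H u') (darts_at K v')"
begin

abbreviation "G \<equiv> three_sum H K u' v' \<sigma>"
abbreviation "D \<equiv> darts_at H u'"
abbreviation "EH' \<equiv> {g \<in> edges H. endp H g False \<noteq> u' \<and> endp H g True \<noteq> u'}"
abbreviation "EK' \<equiv> {g \<in> edges K. endp K g False \<noteq> v' \<and> endp K g True \<noteq> v'}"

definition sinv :: "'e2 \<times> bool \<Rightarrow> 'e1 \<times> bool" where "sinv = inv_into D \<sigma>"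

lemma sinv_sig: "d \<in> D \<Longrightarrow> sinv (\<sigma> d) = d"
  using sig unfolding sinv_def by (simp add: bij_betw_def inv_into_f_f)
lemma sig_sinv: "d \<in> darts_at K v' \<Longrightarrow> \<sigma> (sinv d) = d"
  using sig unfolding sinv_def by (simp add: bij_betw_def f_inv_into_f)
lemma sinv_in: "d \<in> darts_at K v' \<Longrightarrow> sinv d \<in> D"
  using sig unfolding sinv_def by (metis bij_betw_def inv_into_into)
lemma sig_in: "d \<in> D \<Longrightarrow> \<sigma> d \<in> darts_at K v'"
  using sig by (auto simp: bij_betw_def)

lemma noloopH: "g \<in> edges H \<Longrightarrow> endp H g False \<noteq> endp H g True"
  using twoconn_noloop[OF wfH cubH tcH] .
lemma noloopK: "g \<in> edges K \<Longrightarrow> endp K g False \<noteq> endp K g True"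
  using twoconn_noloop[OF wfK cubK tcK] .

lemma other_end_H: "g \<in> edges H \<Longrightarrow> endp H g b = x \<Longrightarrow> endp H g (\<not> b) \<noteq> x"
  using noloopH[of g] by (cases b) auto
lemma other_end_K: "g \<in> edges K \<Longrightarrow> endp K g b = x \<Longrightarrow> endp K g (\<not> b) \<noteq> x"
  using noloopK[of g] by (cases b) auto

lemma endH: "g \<in> edges H \<Longrightarrow> endp H g b \<in> verts H" using wfH by (simp add: wf_graph_def)
lemma endK: "g \<in> edges K \<Longrightarrow> endp K g b \<in> verts K" using wfK by (simp add: wf_graph_def)

definition aH :: "'e1 \<times> bool \<Rightarrow> 'v1" where "aH d = endp H (fst d) (\<not> snd d)"
definition bK :: "'e1 \<times> bool \<Rightarrow> 'v2" where "bK d = endp K (fst (\<sigma> d)) (\<not> snd (\<sigma> d))"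

lemma aH_in: "d \<in> D \<Longrightarrow> aH d \<in> verts H - {u'}"
  using endH other_end_H by (cases d) (auto simp: aH_def darts_at_def)
lemma bK_in: "d \<in> D \<Longrightarrow> bK d \<in> verts K - {v'}"
proof -
  assume "d \<in> D"
  then have "\<sigma> d \<in> darts_at K v'" by (rule sig_in)
  then show ?thesis using endK other_end_K by (cases "\<sigma> d") (auto simp: bK_def darts_at_def)
qed

definition phiH :: "'e1 \<times> bool \<Rightarrow> (('e1 + 'e2) + 'e1 \<times> bool) \<times> bool" where
  "phiH d = (if endp H (fst d) (\<not> snd d) = u' then (Inr (fst d, \<not> snd d), False) else (Inl (Inl (fst d)), snd d))"

definition phiK :: "'e2 \<times> bool \<Rightarrow> (('e1 + 'e2) + 'e1 \<times> bool) \<times> bool" where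
  "phiK d = (if endp K (fst d) (\<not> snd d) = v' then (Inr (sinv (fst d, \<not> snd d)), True) else (Inl (Inr (fst d)), snd d))"

lemma inj_phiH: "inj phiH"
  unfolding inj_def phiH_def by (auto simp: prod_eq_iff split: if_splits)

lemma darts_G_H:
  assumes x: "x \<in> verts H" "x \<noteq> u'"
  shows "darts_at G (Inl x) = phiH ` darts_at H x"
proof (rule set_eqI)
  fix d :: "(('e1 + 'e2) + 'e1 \<times> bool) \<times> bool"
  obtain z b where d: "d = (z, b)" by (cases d)
  show "d \<in> darts_at G (Inl x) \<longleftrightarrow> d \<in> phiH ` darts_at H x"
  proof (cases z)
    case (Inl z1)
    show ?thesis
    proof (cases z1)
      case (Inl g)
      have "(Inl (Inl g), b) = phiH (g', b') \<longleftrightarrow> g' = g \<and> b' = b \<and> endp H g (\<not> b) \<noteq> u'" for g' b'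
        by (cases b; cases b'; auto simp: phiH_def)
      note iff = this
      have L: "(Inl (Inl g), b) \<in> darts_at G (Inl x) \<longleftrightarrow> g \<in> edges H \<and> endp H g False \<noteq> u' \<and> endp H g True \<noteq> u' \<and> endp H g b = x"
        by (auto simp: darts_at_def)
      have R: "(Inl (Inl g), b) \<in> phiH ` darts_at H x \<longleftrightarrow> g \<in> edges H \<and> endp H g b = x \<and> endp H g (\<not> b) \<noteq> u'"
      proof
        assume "(Inl (Inl g), b) \<in> phiH ` darts_at H x"
        then obtain g' b' where "(g', b') \<in> darts_at H x" "(Inl (Inl g), b) = phiH (g', b')" by auto
        then show "g \<in> edges H \<and> endp H g b = x \<and> endp H g (\<not> b) \<noteq> u'" using iff by (auto simp: darts_at_def)
      next
        assume "g \<in> edges H \<and> endp H g b = x \<and> endp H g (\<not> b) \<noteq> u'"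
        then have "(g, b) \<in> darts_at H x" "(Inl (Inl g), b) = phiH (g, b)" using iff by (auto simp: darts_at_def)
        then show "(Inl (Inl g), b) \<in> phiH ` darts_at H x" by (metis image_eqI)
      qed
      show ?thesis unfolding d \<open>z = Inl z1\<close> Inl L R using x(2) by (cases b) auto
    next
      case (Inr k)
      have "(Inl (Inr k), b) \<noteq> phiH d'" for d' by (auto simp: phiH_def)
      then show ?thesis unfolding d \<open>z = Inl z1\<close> Inr
        by (auto simp: darts_at_def image_iff)
    qed
  next
    case (Inr d1)
    obtain g c where d1: "d1 = (g, c)" by (cases d1)
    have L: "(Inr (g, c), b) \<in> darts_at G (Inl x) \<longleftrightarrow> \<not> b \<and> (g, c) \<in> D \<and> endp H g (\<not> c) = x"
      by (auto simp: darts_at_def)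
    have R: "(Inr (g, c), b) \<in> phiH ` darts_at H x \<longleftrightarrow> \<not> b \<and> (g, c) \<in> D \<and> endp H g (\<not> c) = x"
    proof
      assume "(Inr (g, c), b) \<in> phiH ` darts_at H x"
      then obtain g' b' where gb: "(g', b') \<in> darts_at H x" "(Inr (g, c), b) = phiH (g', b')" by auto
      then have "g' = g" "c = (\<not> b')" "\<not> b" "endp H g' (\<not> b') = u'" by (auto simp: phiH_def split: if_splits)
      then show "\<not> b \<and> (g, c) \<in> D \<and> endp H g (\<not> c) = x" using gb(1) by (auto simp: darts_at_def)
    next
      assume a: "\<not> b \<and> (g, c) \<in> D \<and> endp H g (\<not> c) = x"
      then have "(g, \<not> c) \<in> darts_at H x" "endp H g c = u'" by (auto simp: darts_at_def)
      moreover have "phiH (g, \<not> c) = (Inr (g, c), False)" using calculation(2) by (simp add: phiH_def)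
      ultimately have "(Inr (g, c), False) \<in> phiH ` darts_at H x" by (metis image_eqI)
      then show "(Inr (g, c), b) \<in> phiH ` darts_at H x" using a by simp
    qed
    show ?thesis unfolding d Inr d1 L R ..
  qed
qed

lemma bij_H: "x \<in> verts H - {u'} \<Longrightarrow> bij_betw phiH (darts_at H x) (darts_at G (Inl x))"
  using darts_G_H by (simp add: bij_betw_def inj_on_subset[OF inj_phiH])

lemma inj_phiK: "y \<in> verts K \<Longrightarrow> inj_on phiK (darts_at K y)"
proof (rule inj_onI)
  fix d1 d2 assume y: "y \<in> verts K" and d: "d1 \<in> darts_at K y" "d2 \<in> darts_at K y" "phiK d1 = phiK d2"
  obtain k1 b1 where d1: "d1 = (k1, b1)" by (cases d1)
  obtain k2 b2 where d2: "d2 = (k2, b2)" by (cases d2)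
  show "d1 = d2"
  proof (cases "endp K k1 (\<not> b1) = v'")
    case True
    then have T2: "endp K k2 (\<not> b2) = v'" using d(3) unfolding d1 d2 phiK_def by (auto split: if_splits)
    have "sinv (k1, \<not> b1) = sinv (k2, \<not> b2)" using d(3) True T2 unfolding d1 d2 phiK_def by simp
    moreover have "(k1, \<not> b1) \<in> darts_at K v'" "(k2, \<not> b2) \<in> darts_at K v'"
      using True T2 d(1,2) unfolding d1 d2 by (auto simp: darts_at_def)
    ultimately have "(k1, \<not> b1) = (k2, \<not> b2)" by (metis sig_sinv)
    then show ?thesis unfolding d1 d2 by simp
  next
    case False
    then have "endp K k2 (\<not> b2) \<noteq> v'" using d(3) unfolding d1 d2 phiK_def by (auto split: if_splits)
    then show ?thesis using d(3) False unfolding d1 d2 phiK_def by simp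
  qed
qed

lemma darts_G_K:
  assumes y: "y \<in> verts K" "y \<noteq> v'"
  shows "darts_at G (Inr y) = phiK ` darts_at K y"
proof (rule set_eqI)
  fix d :: "(('e1 + 'e2) + 'e1 \<times> bool) \<times> bool"
  obtain z b where d: "d = (z, b)" by (cases d)
  show "d \<in> darts_at G (Inr y) \<longleftrightarrow> d \<in> phiK ` darts_at K y"
  proof (cases z)
    case (Inl z1)
    show ?thesis
    proof (cases z1)
      case (Inr k)
      have "(Inl (Inr k), b) = phiK (g', b') \<longleftrightarrow> g' = k \<and> b' = b \<and> endp K k (\<not> b) \<noteq> v'" for g' b'
        by (cases b; cases b'; auto simp: phiK_def)
      note iff = this
      have L: "(Inl (Inr k), b) \<in> darts_at G (Inr y) \<longleftrightarrow> k \<in> edges K \<and> endp K k False \<noteq> v' \<and> endp K k True \<noteq> v' \<and> endp K k b = y"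
        by (auto simp: darts_at_def)
      have R: "(Inl (Inr k), b) \<in> phiK ` darts_at K y \<longleftrightarrow> k \<in> edges K \<and> endp K k b = y \<and> endp K k (\<not> b) \<noteq> v'"
      proof
        assume "(Inl (Inr k), b) \<in> phiK ` darts_at K y"
        then obtain g' b' where "(g', b') \<in> darts_at K y" "(Inl (Inr k), b) = phiK (g', b')" by auto
        then show "k \<in> edges K \<and> endp K k b = y \<and> endp K k (\<not> b) \<noteq> v'" using iff by (auto simp: darts_at_def)
      next
        assume "k \<in> edges K \<and> endp K k b = y \<and> endp K k (\<not> b) \<noteq> v'"
        then have "(k, b) \<in> darts_at K y" "(Inl (Inr k), b) = phiK (k, b)" using iff by (auto simp: darts_at_def)
        then show "(Inl (Inr k), b) \<in> phiK ` darts_at K y" by (metis image_eqI)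
      qed
      show ?thesis unfolding d \<open>z = Inl z1\<close> Inr L R using y(2) by (cases b) auto
    next
      case (Inl g)
      have "(Inl (Inl g), b) \<noteq> phiK d'" for d' by (auto simp: phiK_def)
      then show ?thesis unfolding d \<open>z = Inl z1\<close> Inl
        by (auto simp: darts_at_def image_iff)
    qed
  next
    case (Inr d1)
    have L: "(Inr d1, b) \<in> darts_at G (Inr y) \<longleftrightarrow> b \<and> d1 \<in> D \<and> bK d1 = y"
      by (auto simp: darts_at_def bK_def)
    have R: "(Inr d1, b) \<in> phiK ` darts_at K y \<longleftrightarrow> b \<and> d1 \<in> D \<and> bK d1 = y"
    proof
      assume "(Inr d1, b) \<in> phiK ` darts_at K y"
      then obtain k b' where kb: "(k, b') \<in> darts_at K y" "(Inr d1, b) = phiK (k, b')" by auto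
      then have e: "endp K k (\<not> b') = v'" "d1 = sinv (k, \<not> b')" "b" by (auto simp: phiK_def split: if_splits)
      have kd: "(k, \<not> b') \<in> darts_at K v'" using kb(1) e(1) by (auto simp: darts_at_def)
      then have "d1 \<in> D" "\<sigma> d1 = (k, \<not> b')" using e(2) sinv_in sig_sinv by auto
      then show "b \<and> d1 \<in> D \<and> bK d1 = y" using e(3) kb(1) by (auto simp: bK_def darts_at_def)
    next
      assume a: "b \<and> d1 \<in> D \<and> bK d1 = y"
      obtain k c where sk: "\<sigma> d1 = (k, c)" by (cases "\<sigma> d1")
      have kd: "(k, c) \<in> darts_at K v'" using sig_in a sk by metis
      then have "(k, \<not> c) \<in> darts_at K y" using a sk by (auto simp: darts_at_def bK_def)
      moreover have "phiK (k, \<not> c) = (Inr d1, True)"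
      proof -
        have "endp K k c = v'" using kd by (simp add: darts_at_def)
        moreover have "sinv (k, c) = d1" using sinv_sig[of d1] a sk by simp
        ultimately show ?thesis by (simp add: phiK_def)
      qed
      ultimately have "(Inr d1, True) \<in> phiK ` darts_at K y" by (metis image_eqI)
      then show "(Inr d1, b) \<in> phiK ` darts_at K y" using a by simp
    qed
    show ?thesis unfolding d Inr L R ..
  qed
qed

lemma bij_K: "y \<in> verts K - {v'} \<Longrightarrow> bij_betw phiK (darts_at K y) (darts_at G (Inr y))"
  using darts_G_K inj_phiK by (simp add: bij_betw_def)

lemma wfG: "wf_graph G"
  unfolding wf_graph_def
proof (intro conjI ballI allI)
  show "finite (verts G)" using wfH wfK by (simp add: wf_graph_def)
  have "finite D" using finite_darts[OF wfH] .
  then show "finite (edges G)" using wfH wfK by (simp add: wf_graph_def)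
  fix x b assume x: "x \<in> edges G"
  show "endp G x b \<in> verts G"
  proof (cases x)
    case (Inr d)
    then have "d \<in> D" using x by auto
    then show ?thesis using aH_in bK_in Inr by (auto simp: aH_def bK_def)
  next
    case (Inl z)
    then show ?thesis using x endH endK by (cases b; auto)
  qed
qed

lemma cubG: "cubic G"
  unfolding cubic_def
proof
  fix w assume "w \<in> verts G"
  then consider (H) x where "x \<in> verts H - {u'}" "w = Inl x" | (K) y where "y \<in> verts K - {v'}" "w = Inr y" by auto
  then show "card (darts_at G w) = 3"
  proof cases
    case H then show ?thesis using bij_betw_same_card[OF bij_H[OF H(1)]] cubH by (simp add: cubic_def)
  next
    case K then show ?thesis using bij_betw_same_card[OF bij_K[OF K(1)]] cubK by (simp add: cubic_def)
  qed
qed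

end

context ThSum
begin

lemma cD: "card D = 3" using cubH u' by (simp add: cubic_def)
lemma finD: "finite D" using finite_darts[OF wfH] .

lemma tcG: "two_connected G"
  unfolding two_conn_cut[OF wfG]
proof (intro conjI allI impI)
  have "D \<noteq> {}" using cD by auto
  then obtain d where "d \<in> D" by auto
  then have "aH d \<in> verts H - {u'}" by (rule aH_in)
  then show "verts G \<noteq> {}" by auto
  fix S assume S: "S \<subseteq> verts G" "S \<noteq> {}" "S \<noteq> verts G"
  define H' where "H' = verts H - {u'}"
  define K' where "K' = verts K - {v'}"
  define SH where "SH = {x \<in> H'. Inl x \<in> S}"
  define SK where "SK = {y \<in> K'. Inr y \<in> S}"
  define A where "A = {d \<in> D. aH d \<in> SH}"
  define B where "B = {d \<in> D. bK d \<in> SK}"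
  define IH where "IH = cross H SH \<inter> EH'"
  define IK where "IK = cross K SK \<inter> EK'"
  have finIH: "finite IH" using wfH by (auto simp: IH_def wf_graph_def)
  have finIK: "finite IK" using wfK by (auto simp: IK_def wf_graph_def)
  have finA: "finite A" "finite B" using finD by (auto simp: A_def B_def)
  have AD: "A \<subseteq> D" "B \<subseteq> D" by (auto simp: A_def B_def)
  have cDA: "card (D - A) = 3 - card A" "card (D - B) = 3 - card B"
    using AD finD cD by (simp_all add: card_Diff_subset finA)
  have cA3: "card A \<le> 3" "card B \<le> 3" using AD finD cD by (metis card_mono)+
  have tcH': "\<And>T. T \<subseteq> verts H \<Longrightarrow> T \<noteq> {} \<Longrightarrow> T \<noteq> verts H \<Longrightarrow> 2 \<le> card (cross H T)"
    using conjunct2[OF iffD1[OF two_conn_cut[OF wfH] tcH]] by blast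
  have tcK': "\<And>T. T \<subseteq> verts K \<Longrightarrow> T \<noteq> {} \<Longrightarrow> T \<noteq> verts K \<Longrightarrow> 2 \<le> card (cross K T)"
    using conjunct2[OF iffD1[OF two_conn_cut[OF wfK] tcK]] by blast
  have touchH: "\<exists>d\<in>D. fst d = g \<and> aH d = endp H g (\<not> b)" if "g \<in> edges H" "endp H g b = u'" for g b
    using that by (intro bexI[of _ "(g, b)"]) (auto simp: darts_at_def aH_def)
  have touchK: "\<exists>d\<in>D. fst (\<sigma> d) = g \<and> bK d = endp K g (\<not> b)" if "g \<in> edges K" "endp K g b = v'" for g b
  proof -
    have gd: "(g, b) \<in> darts_at K v'" using that by (simp add: darts_at_def)
    then have "sinv (g, b) \<in> D" "\<sigma> (sinv (g, b)) = (g, b)" using sinv_in sig_sinv by auto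
    then show ?thesis by (intro bexI[of _ "sinv (g, b)"]) (auto simp: bK_def)
  qed
  have nH1: "2 \<le> card IH + card A" if "SH \<noteq> {}"
  proof -
    have "cross H SH \<subseteq> IH \<union> fst ` A"
    proof
      fix g assume g: "g \<in> cross H SH"
      show "g \<in> IH \<union> fst ` A"
      proof (cases "g \<in> EH'")
        case True then show ?thesis using g by (simp add: IH_def)
      next
        case False
        then obtain b where b: "endp H g b = u'" using g by (auto simp: cross_def)
        have gE: "g \<in> edges H" using g by (simp add: cross_def)
        obtain d where d: "d \<in> D" "fst d = g" "aH d = endp H g (\<not> b)" using touchH[OF gE b] by blast
        have "u' \<notin> SH" by (simp add: SH_def H'_def)
        then have "endp H g (\<not> b) \<in> SH" using g b by (cases b) (auto simp: cross_def)
        then show ?thesis using d by (auto simp: A_def)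
      qed
    qed
    moreover have "SH \<subseteq> verts H" "SH \<noteq> verts H" using u' by (auto simp: SH_def H'_def)
    ultimately have "2 \<le> card (IH \<union> fst ` A)"
      using tcH'[of SH] that finIH finA by (meson card_mono finite_UnI finite_imageI order_trans)
    also have "\<dots> \<le> card IH + card (fst ` A)" by (rule card_Un_le)
    also have "\<dots> \<le> card IH + card A" using card_image_le[OF finA(1)] by simp
    finally show ?thesis .
  qed
  have nH2: "2 \<le> card IH + card (D - A)" if "SH \<noteq> H'"
  proof -
    define T where "T = insert u' SH"
    have "cross H T \<subseteq> IH \<union> fst ` (D - A)"
    proof
      fix g assume g: "g \<in> cross H T"
      show "g \<in> IH \<union> fst ` (D - A)"
      proof (cases "g \<in> EH'")
        case True
        then have "g \<in> cross H SH" using g by (auto simp: cross_def T_def)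
        then show ?thesis using True by (simp add: IH_def)
      next
        case False
        then obtain b where b: "endp H g b = u'" using g by (auto simp: cross_def)
        have gE: "g \<in> edges H" using g by (simp add: cross_def)
        obtain d where d: "d \<in> D" "fst d = g" "aH d = endp H g (\<not> b)" using touchH[OF gE b] by blast
        have "endp H g (\<not> b) \<notin> T" using g b by (cases b) (auto simp: cross_def T_def)
        then have "aH d \<notin> SH" using d by (simp add: T_def)
        then show ?thesis using d by (auto simp: A_def)
      qed
    qed
    moreover have "T \<subseteq> verts H" "T \<noteq> {}" using u' by (auto simp: T_def SH_def H'_def)
    moreover have "T \<noteq> verts H"
    proof
      assume "T = verts H"
      then have "H' \<subseteq> SH" by (auto simp: T_def H'_def)
      then show False using that by (auto simp: SH_def)
    qed
    ultimately have "2 \<le> card (IH \<union> fst ` (D - A))"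
      using tcH'[of T] finIH finD by (meson card_mono finite_UnI finite_imageI finite_Diff order_trans)
    also have "\<dots> \<le> card IH + card (fst ` (D - A))" by (rule card_Un_le)
    also have "\<dots> \<le> card IH + card (D - A)" using card_image_le[of "D - A" fst] finD by simp
    finally show ?thesis .
  qed
  have nK1: "2 \<le> card IK + card B" if "SK \<noteq> {}"
  proof -
    have "cross K SK \<subseteq> IK \<union> (fst \<circ> \<sigma>) ` B"
    proof
      fix g assume g: "g \<in> cross K SK"
      show "g \<in> IK \<union> (fst \<circ> \<sigma>) ` B"
      proof (cases "g \<in> EK'")
        case True then show ?thesis using g by (simp add: IK_def)
      next
        case False
        then obtain b where b: "endp K g b = v'" using g by (auto simp: cross_def)
        have gE: "g \<in> edges K" using g by (simp add: cross_def)
        obtain d where d: "d \<in> D" "fst (\<sigma> d) = g" "bK d = endp K g (\<not> b)" using touchK[OF gE b] by blast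
        have "v' \<notin> SK" by (simp add: SK_def K'_def)
        then have "endp K g (\<not> b) \<in> SK" using g b by (cases b) (auto simp: cross_def)
        then show ?thesis using d by (auto simp: B_def)
      qed
    qed
    moreover have "SK \<subseteq> verts K" "SK \<noteq> verts K" using v' by (auto simp: SK_def K'_def)
    ultimately have "2 \<le> card (IK \<union> (fst \<circ> \<sigma>) ` B)"
      using tcK'[of SK] that finIK finA by (meson card_mono finite_UnI finite_imageI order_trans)
    also have "\<dots> \<le> card IK + card ((fst \<circ> \<sigma>) ` B)" by (rule card_Un_le)
    also have "\<dots> \<le> card IK + card B" using card_image_le[OF finA(2)] by simp
    finally show ?thesis .
  qed
  have nK2: "2 \<le> card IK + card (D - B)" if "SK \<noteq> K'"
  proof -
    define T where "T = insert v' SK"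
    have "cross K T \<subseteq> IK \<union> (fst \<circ> \<sigma>) ` (D - B)"
    proof
      fix g assume g: "g \<in> cross K T"
      show "g \<in> IK \<union> (fst \<circ> \<sigma>) ` (D - B)"
      proof (cases "g \<in> EK'")
        case True
        then have "g \<in> cross K SK" using g by (auto simp: cross_def T_def)
        then show ?thesis using True by (simp add: IK_def)
      next
        case False
        then obtain b where b: "endp K g b = v'" using g by (auto simp: cross_def)
        have gE: "g \<in> edges K" using g by (simp add: cross_def)
        obtain d where d: "d \<in> D" "fst (\<sigma> d) = g" "bK d = endp K g (\<not> b)" using touchK[OF gE b] by blast
        have "endp K g (\<not> b) \<notin> T" using g b by (cases b) (auto simp: cross_def T_def)
        then have "bK d \<notin> SK" using d by (simp add: T_def)
        then show ?thesis using d by (auto simp: B_def)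
      qed
    qed
    moreover have "T \<subseteq> verts K" "T \<noteq> {}" using v' by (auto simp: T_def SK_def K'_def)
    moreover have "T \<noteq> verts K"
    proof
      assume "T = verts K"
      then have "K' \<subseteq> SK" by (auto simp: T_def K'_def)
      then show False using that by (auto simp: SK_def)
    qed
    ultimately have "2 \<le> card (IK \<union> (fst \<circ> \<sigma>) ` (D - B))"
      using tcK'[of T] finIK finD by (meson card_mono finite_UnI finite_imageI finite_Diff order_trans)
    also have "\<dots> \<le> card IK + card ((fst \<circ> \<sigma>) ` (D - B))" by (rule card_Un_le)
    also have "\<dots> \<le> card IK + card (D - B)" using card_image_le[of "D - B" "fst \<circ> \<sigma>"] finD by simp
    finally show ?thesis .
  qed
  define AB where "AB = (A - B) \<union> (B - A)"
  have tot: "card IH + card IK + card AB \<le> card (cross G S)"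
  proof -
    have s1: "Inl ` Inl ` IH \<subseteq> cross G S"
    proof
      fix x :: "('e1 + 'e2) + 'e1 \<times> bool" assume "x \<in> Inl ` Inl ` IH"
      then obtain g where g: "g \<in> IH" "x = Inl (Inl g)" by auto
      then have ge: "g \<in> EH'" "g \<in> cross H SH" by (auto simp: IH_def)
      have "endp H g c \<in> H'" for c using ge endH by (cases c) (auto simp: H'_def)
      then have "Inl (endp H g c) \<in> S \<longleftrightarrow> endp H g c \<in> SH" for c by (simp add: SH_def)
      then show "x \<in> cross G S" using g ge by (simp add: cross_def)
    qed
    have s2: "Inl ` Inr ` IK \<subseteq> cross G S"
    proof
      fix x :: "('e1 + 'e2) + 'e1 \<times> bool" assume "x \<in> Inl ` Inr ` IK"
      then obtain g where g: "g \<in> IK" "x = Inl (Inr g)" by auto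
      then have ge: "g \<in> EK'" "g \<in> cross K SK" by (auto simp: IK_def)
      have "endp K g c \<in> K'" for c using ge endK by (cases c) (auto simp: K'_def)
      then have "Inr (endp K g c) \<in> S \<longleftrightarrow> endp K g c \<in> SK" for c by (simp add: SK_def)
      then show "x \<in> cross G S" using g ge by (simp add: cross_def)
    qed
    have s3: "Inr ` AB \<subseteq> cross G S"
    proof
      fix x :: "('e1 + 'e2) + 'e1 \<times> bool" assume "x \<in> Inr ` AB"
      then obtain d where d: "d \<in> AB" "x = Inr d" by auto
      then have dD: "d \<in> D" using AD by (auto simp: AB_def)
      have "Inl (aH d) \<in> S \<longleftrightarrow> d \<in> A" using aH_in[OF dD] dD by (simp add: SH_def A_def H'_def)
      moreover have "Inr (bK d) \<in> S \<longleftrightarrow> d \<in> B" using bK_in[OF dD] dD by (simp add: SK_def B_def K'_def)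
      ultimately show "x \<in> cross G S" using d dD by (auto simp: cross_def AB_def aH_def bK_def)
    qed
    have finAB: "finite AB" using finA by (simp add: AB_def)
    have "card (Inl ` Inl ` IH \<union> Inl ` Inr ` IK \<union> Inr ` AB) =
        card (Inl ` Inl ` IH :: (('e1 + 'e2) + 'e1 \<times> bool) set) + card (Inl ` Inr ` IK :: (('e1 + 'e2) + 'e1 \<times> bool) set)
        + card (Inr ` AB :: (('e1 + 'e2) + 'e1 \<times> bool) set)"
      using finIH finIK finAB by (subst card_Un_disjoint; auto)+
    also have "\<dots> = card IH + card IK + card AB"
      by (simp add: card_image inj_on_def)
    finally have "card (Inl ` Inl ` IH \<union> Inl ` Inr ` IK \<union> Inr ` AB) = card IH + card IK + card AB" .
    moreover have "card (Inl ` Inl ` IH \<union> Inl ` Inr ` IK \<union> Inr ` AB) \<le> card (cross G S)"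
      using s1 s2 s3 finite_cross[OF wfG] by (intro card_mono) auto
    ultimately show ?thesis by simp
  qed
  have A0: "A = {}" if "SH = {}" using that by (simp add: A_def)
  have AD': "A = D" if "SH = H'" using that aH_in by (auto simp: A_def H'_def)
  have B0: "B = {}" if "SK = {}" using that by (simp add: B_def)
  have BD': "B = D" if "SK = K'" using that bK_in by (auto simp: B_def K'_def)
  have notboth0: "\<not> (SH = {} \<and> SK = {})"
  proof
    assume "SH = {} \<and> SK = {}"
    then have "S = {}" using S(1) by (auto simp: SH_def SK_def H'_def K'_def)
    then show False using S(2) by simp
  qed
  have notbothF: "\<not> (SH = H' \<and> SK = K')"
  proof
    assume "SH = H' \<and> SK = K'"
    then have "verts G \<subseteq> S" by (auto simp: SH_def SK_def H'_def K'_def)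
    then have "S = verts G" using S(1) by (rule antisym[rotated])
    then show False using S(3) by simp
  qed
  have cAB: "card AB = card A" if "B = {}" using that by (simp add: AB_def)
  have cAB2: "card AB = card (D - A)" if "B = D"
  proof -
    have "AB = D - A" unfolding AB_def using that AD by auto
    then show ?thesis by simp
  qed
  have cAB3: "card AB = card B" if "A = {}" using that by (simp add: AB_def)
  have cAB4: "card AB = card (D - B)" if "A = D"
  proof -
    have "AB = D - B" unfolding AB_def using that AD by auto
    then show ?thesis by simp
  qed
  show "2 \<le> card (cross G S)"
  proof (cases "SH = {}")
    case True
    then have "card AB = card B" using A0 cAB3 by simp
    show ?thesis
    proof (cases "SK = {}")
      case True then show ?thesis using notboth0 \<open>SH = {}\<close> by simp
    next
      case False
      then show ?thesis using nK1 tot \<open>card AB = card B\<close> by simp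
    qed
  next
    case SHne: False
    show ?thesis
    proof (cases "SH = H'")
      case True
      then have "card AB = card (D - B)" using AD' cAB4 by simp
      show ?thesis
      proof (cases "SK = K'")
        case True then show ?thesis using notbothF \<open>SH = H'\<close> by simp
      next
        case False
        then show ?thesis using nK2 tot \<open>card AB = card (D - B)\<close> by simp
      qed
    next
      case SHnf: False
      have h1: "2 \<le> card IH + card A" using nH1 SHne by simp
      have h2: "2 \<le> card IH + (3 - card A)" using nH2 SHnf cDA by simp
      then have IH1: "1 \<le> card IH" using h1 cA3 by linarith
      show ?thesis
      proof (cases "SK = {}")
        case True
        then show ?thesis using B0 cAB tot h1 by simp
      next
        case SKne: False
        show ?thesis
        proof (cases "SK = K'")
          case True
          then show ?thesis using BD' cAB2 tot nH2 SHnf by simp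
        next
          case False
          have "2 \<le> card IK + card B" "2 \<le> card IK + (3 - card B)" using nK1 nK2 SKne False cDA by simp_all
          then have "1 \<le> card IK" using cA3 by linarith
          then show ?thesis using IH1 tot by linarith
        qed
      qed
    qed
  qed
qed

end

locale ThSumA = ThSum H K u' v' \<sigma>
  for H :: "('v1, 'e1) mgraph" and K :: "('v2, 'e2) mgraph" and u' v' \<sigma> +
  fixes u :: 'v1 and fH :: "'e1 \<times> bool \<Rightarrow> nat" and cK :: "'e2 \<Rightarrow> nat"
  assumes u: "u \<in> verts H" and uu': "u \<noteq> u'" and fH: "bij_betw fH (darts_at H u) {0, 1, 2}"
    and pmiH: "pmi (inflate H u fH) = 4" and colK: "colouring K cK"
begin

definition psiH :: "(('e1 + 'e2) + 'e1 \<times> bool) \<times> bool \<Rightarrow> 'e1 \<times> bool" where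
  "psiH d = (case fst d of Inl (Inl g) \<Rightarrow> (g, snd d) | Inl (Inr k) \<Rightarrow> undefined
      | Inr d' \<Rightarrow> (fst d', \<not> snd d'))"

definition fG :: "(('e1 + 'e2) + 'e1 \<times> bool) \<times> bool \<Rightarrow> nat" where
  "fG d = fH (psiH d)"

abbreviation "Hu \<equiv> inflate H u fH"
abbreviation "Gu \<equiv> inflate G (Inl u) fG"

lemma fG_phi: "fG (phiH d) = fH d"
  by (cases d) (auto simp: fG_def psiH_def phiH_def)

lemma inj_Inl: "inj_on Inl X" by simp

lemma uX: "u \<in> verts H - {u'}" using u uu' by simp

lemmas transf = inflate_transfer[where \<phi> = phiH and hv = Inl and X = "verts H - {u'}" and u = u and fH = fH
    and fG = fG, OF bij_H inj_Inl uX fH fG_phi]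

lemma fGb: "bij_betw fG (darts_at G (Inl u)) {0, 1, 2}" using transf(1) .

lemma TH: "x \<in> verts H \<Longrightarrow> x \<noteq> u' \<Longrightarrow> x \<noteq> u \<Longrightarrow>
    bij_betw (Phi phiH) (darts_at Hu (Inl x)) (darts_at Gu (Inl (Inl x)))"
  using transf(2) by blast

lemma TJ: "j \<in> {0, 1, 2} \<Longrightarrow> bij_betw (Phi phiH) (darts_at Hu (Inr j)) (darts_at Gu (Inr j))"
  using transf(3) by blast

lemma TK: "y \<in> verts K \<Longrightarrow> y \<noteq> v' \<Longrightarrow> bij_betw (Lft \<circ> phiK) (darts_at K y) (darts_at Gu (Inl (Inr y)))"
proof -
  assume y: "y \<in> verts K" "y \<noteq> v'"
  have "darts_at Gu (Inl (Inr y)) = Lft ` darts_at G (Inr y)" by (rule darts_inflate_Inl') simp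
  also have "\<dots> = Lft ` phiK ` darts_at K y" using darts_G_K[OF y] by simp
  finally have "darts_at Gu (Inl (Inr y)) = (Lft \<circ> phiK) ` darts_at K y" by (simp add: image_comp)
  moreover have "inj_on (Lft \<circ> phiK) (darts_at K y)"
    using inj_phiK[OF y(1)] by (rule comp_inj_on) (rule inj_on_subset[OF inj_Lft], simp)
  ultimately show ?thesis by (simp add: bij_betw_def)
qed

lemma uG: "Inl u \<in> verts G" using u uu' by simp

lemma fG_sub: "fG ` darts_at G (Inl u) \<subseteq> {0, 1, 2}" using fGb by (simp add: bij_betw_def)
lemma fH_sub: "fH ` darts_at H u \<subseteq> {0, 1, 2}" using fH by (simp add: bij_betw_def)

lemma wfGu: "wf_graph Gu" using wf_inflate[OF wfG fG_sub] .
lemma cubGu: "cubic Gu" using cubic_inflate[OF cubG fGb] .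
lemma wfHu: "wf_graph Hu" using wf_inflate[OF wfH fH_sub] .
lemma cubHu: "cubic Hu" using cubic_inflate[OF cubH fH] .

lemma verts_Gu_cases:
  assumes "w \<in> verts Gu"
  obtains (H) x where "x \<in> verts H" "x \<noteq> u'" "x \<noteq> u" "w = Inl (Inl x)"
    | (K) y where "y \<in> verts K" "y \<noteq> v'" "w = Inl (Inr y)"
    | (T) j where "j \<in> {0, 1, 2}" "w = Inr j"
  using assms by auto

lemma verts_Hu_cases:
  assumes "w \<in> verts Hu"
  obtains (H) x where "x \<in> verts H" "x \<noteq> u'" "x \<noteq> u" "w = Inl x"
    | (U) "w = Inl u'"
    | (T) j where "j \<in> {0, 1, 2}" "w = Inr j"
  using assms by auto

definition epsH :: "'e1 \<Rightarrow> ('e1 + 'e2) + 'e1 \<times> bool" where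
  "epsH g = (if endp H g False = u' then Inr (g, False) else if endp H g True = u' then Inr (g, True)
     else Inl (Inl g))"

lemma fst_phiH: "g \<in> edges H \<Longrightarrow> endp H g b \<noteq> u' \<Longrightarrow> fst (phiH (g, b)) = epsH g"
  by (cases b) (auto simp: phiH_def epsH_def)

lemma dart_not_u':
  assumes "(Inl g, b) \<in> darts_at Hu w" "w \<noteq> Inl u'"
  shows "endp H g b \<noteq> u'"
  using assms uu' by (auto simp: darts_at_def split: if_splits)

lemma fst_Phi_H:
  assumes "(Inl g, b) \<in> darts_at Hu w" "w \<noteq> Inl u'"
  shows "fst (Phi phiH (Inl g, b)) = Inl (epsH g)"
proof -
  have "g \<in> edges H" using assms(1) by (auto simp: darts_at_def)
  then show ?thesis using fst_phiH dart_not_u'[OF assms] by (simp add: Phi_def Lft_def)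
qed

lemma epsH_D: "d \<in> D \<Longrightarrow> epsH (fst d) = Inr d"
proof -
  assume d: "d \<in> D"
  obtain g b where gb: "d = (g, b)" by (cases d)
  have g: "g \<in> edges H" "endp H g b = u'" using d gb by (auto simp: darts_at_def)
  show ?thesis
  proof (cases b)
    case True
    then have "endp H g False \<noteq> u'" using other_end_H[OF g] by simp
    then show ?thesis using g gb True by (simp add: epsH_def)
  next
    case False then show ?thesis using g gb by (simp add: epsH_def)
  qed
qed

lemma epsH_edge: "g \<in> edges H \<Longrightarrow> epsH g \<in> edges G"
  by (auto simp: epsH_def darts_at_def)

lemma darts_Hu_u': "darts_at Hu (Inl u') = Lft ` D"
  using uu' by (intro darts_inflate_Inl') simp

lemma even_K: "even (card (verts K))"
proof -
  have pm: "perfect_matching K {g \<in> edges K. cK g = 0}" using colour_class_pm[OF cubK colK] by simp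
  have "cross K (verts K) = {}" using wfK by (auto simp: cross_def wf_graph_def)
  then show ?thesis using parity[OF wfK pm order_refl] by simp
qed

definition SKs :: "(('v1 + 'v2) + nat) set" where "SKs = Inl ` Inr ` (verts K - {v'})"

lemma cross_Gu_SKs: "cross Gu SKs = Inl ` Inr ` D"
proof (rule set_eqI)
  fix x
  show "x \<in> cross Gu SKs \<longleftrightarrow> x \<in> Inl ` Inr ` D"
  proof (cases x)
    case (Inr i)
    then show ?thesis by (auto simp: cross_def SKs_def)
  next
    case (Inl z)
    show ?thesis
    proof (cases z)
      case (Inr d)
      show ?thesis
      proof (cases "d \<in> D")
        case True
        then show ?thesis using Inl Inr aH_in[OF True] bK_in[OF True]
          by (auto simp: cross_def SKs_def aH_def bK_def)
      next
        case False
        then show ?thesis using Inl Inr by (auto simp: cross_def)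
      qed
    next
      case (Inl z1)
      show ?thesis
      proof (cases z1)
        case (Inl g)
        then show ?thesis using \<open>x = Inl z\<close> \<open>z = Inl z1\<close> by (auto simp: cross_def SKs_def)
      next
        case (Inr k)
        have x: "x = Inl (Inl (Inr k))" using \<open>x = Inl z\<close> \<open>z = Inl z1\<close> Inr by simp
        have "x \<notin> cross Gu SKs"
        proof
          assume c: "x \<in> cross Gu SKs"
          then have "x \<in> edges Gu" by (simp add: cross_def)
          then have kE: "k \<in> EK'" using x by auto
          have "endp K k b \<in> verts K - {v'}" for b using kE endK by (cases b) auto
          then have "endp Gu x b \<in> SKs" for b using x by (simp add: SKs_def)
          then show False using c by (simp add: cross_def)
        qed
        moreover have "x \<notin> Inl ` Inr ` D" using x by auto
        ultimately show ?thesis by simp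
      qed
    qed
  qed
qed

lemma pm_new_edges:
  assumes pm: "perfect_matching Gu M"
  shows "M \<inter> Inl ` Inr ` D \<noteq> {}"
proof -
  have sub: "SKs \<subseteq> verts Gu" by (auto simp: SKs_def)
  have "card SKs = card (verts K - {v'})" unfolding SKs_def by (simp add: card_image inj_on_def)
  also have "\<dots> = card (verts K) - 1" using v' by simp
  finally have cS: "card SKs = card (verts K) - 1" .
  have "card (verts K) \<noteq> 0" using v' wfK by (auto simp: wf_graph_def)
  then have "odd (card SKs)" using cS even_K by (metis One_nat_def Suc_pred even_Suc neq0_conv)
  then have "odd (2 * card (M \<inter> inner Gu SKs) + card (M \<inter> cross Gu SKs))"
    using parity[OF wfGu pm sub] by simp
  then have "odd (card (M \<inter> cross Gu SKs))" by simp
  then show ?thesis unfolding cross_Gu_SKs by (metis card.empty even_zero)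
qed

lemma nocolHu: "\<not> three_edge_colourable Hu"
proof
  assume "three_edge_colourable Hu"
  then obtain c where "colouring Hu c" by (auto simp: tec_iff)
  then obtain S where "pmcover Hu S" "card S \<le> 3" using colourable_cover[OF cubHu] by blast
  then have "pmi Hu \<le> 3" using pmi_le by (metis enat_ord_simps(1) order_trans numeral_eq_enat)
  then show False using pmiH by simp
qed

lemma new_edge_in: "d \<in> D \<Longrightarrow> Inl (Inr d) \<in> edges Gu"
proof -
  assume "d \<in> D"
  then have "Inr d \<in> edges G" unfolding three_sum_simps by (intro UnI2 imageI)
  then show ?thesis unfolding inflate_simps by (rule UnI1[OF imageI])
qed

lemma nocolGu: "\<not> three_edge_colourable Gu"
proof
  assume "three_edge_colourable Gu"
  then obtain cG where col: "colouring Gu cG" by (auto simp: tec_iff)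
  have col3: "\<And>x. x \<in> edges Gu \<Longrightarrow> cG x < 3" using col unfolding colouring_def by blast
  have allc: "\<exists>d\<in>D. cG (Inl (Inr d)) = j" if "j < 3" for j
  proof -
    have "perfect_matching Gu {g \<in> edges Gu. cG g = j}" using colour_class_pm[OF cubGu col that] .
    then have "{g \<in> edges Gu. cG g = j} \<inter> Inl ` Inr ` D \<noteq> {}" by (rule pm_new_edges)
    then show ?thesis by blast
  qed
  have img: "(\<lambda>d. cG (Inl (Inr d))) ` D = {0, 1, 2}"
  proof
    show "(\<lambda>d. cG (Inl (Inr d))) ` D \<subseteq> {0, 1, 2}"
    proof
      fix t assume "t \<in> (\<lambda>d. cG (Inl (Inr d))) ` D"
      then obtain d where "d \<in> D" "t = cG (Inl (Inr d))" by blast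
      then have "t < 3" using col3 new_edge_in by blast
      then show "t \<in> {0, 1, 2}" by auto
    qed
    show "{0, 1, 2} \<subseteq> (\<lambda>d. cG (Inl (Inr d))) ` D"
    proof
      fix t :: nat assume "t \<in> {0, 1, 2}"
      then have "t < 3" by auto
      then obtain d where "d \<in> D" "cG (Inl (Inr d)) = t" using allc by blast
      then show "t \<in> (\<lambda>d. cG (Inl (Inr d))) ` D" by (metis image_eqI)
    qed
  qed
  have injD: "inj_on (\<lambda>d. cG (Inl (Inr d))) D"
    by (rule eq_card_imp_inj_on[OF finD]) (simp add: img cD)
  define cH where "cH x = (case x of Inl g \<Rightarrow> cG (Inl (epsH g)) | Inr i \<Rightarrow> cG (Inr i))" for x
  have "colouring Hu cH" unfolding colouring_def
  proof (intro conjI ballI)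
    fix x assume x: "x \<in> edges Hu"
    show "cH x < 3"
    proof (cases x)
      case (Inl g)
      then have "g \<in> edges H" using x by auto
      then have "Inl (epsH g) \<in> edges Gu" using epsH_edge by simp
      then show ?thesis using col3 Inl by (simp add: cH_def)
    next
      case (Inr i)
      then have "Inr i \<in> edges Gu" using x by auto
      then show ?thesis using col3 Inr by (simp add: cH_def)
    qed
  next
    fix w assume w: "w \<in> verts Hu"
    have injG: "inj_on (\<lambda>d. cG (fst d)) (darts_at Gu w')" if "w' \<in> verts Gu" for w'
      using col that unfolding colouring_def by blast
    have k2: "cH (fst d) = cG (fst (Phi phiH d))" if "d \<in> darts_at Hu w" "w \<noteq> Inl u'" for d
    proof -
      obtain x b where d: "d = (x, b)" by (cases d)
      show ?thesis
      proof (cases x)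
        case (Inl g)
        then show ?thesis using fst_Phi_H[of g b w] that d by (simp add: cH_def)
      next
        case (Inr i)
        then show ?thesis using d by (simp add: cH_def Phi_def)
      qed
    qed
    from w show "inj_on (\<lambda>d. cH (fst d)) (darts_at Hu w)"
    proof (cases rule: verts_Hu_cases)
      case (H x)
      have "Inl (Inl x) \<in> verts Gu" using H by auto
      moreover have "w \<noteq> Inl u'" using H by simp
      ultimately show ?thesis unfolding H(4) using inj_transfer2[OF TH[OF H(1,2,3)] k2 injG]
        using H(4) by blast
    next
      case (T j)
      have "Inr j \<in> verts Gu" using T by auto
      moreover have "w \<noteq> Inl u'" using T by simp
      ultimately show ?thesis unfolding T(2) using inj_transfer2[OF TJ[OF T(1)] k2 injG]
        using T(2) by blast
    next
      case U
      have "inj_on ((\<lambda>d. cH (fst d)) \<circ> Lft) D"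
      proof (rule inj_on_cong[THEN iffD1, OF _ injD])
        fix d assume "d \<in> D"
        then show "cG (Inl (Inr d)) = ((\<lambda>d. cH (fst d)) \<circ> Lft) d"
          using epsH_D by (simp add: cH_def Lft_def)
      qed
      then show ?thesis unfolding U darts_Hu_u' by (rule inj_on_imageI)
    qed
  qed
  then show False using nocolHu by (auto simp: tec_iff)
qed

end

lemma dart_in_edges': "d \<in> darts_at X w \<Longrightarrow> fst d \<in> edges X"
  by (cases d) (simp add: darts_at_def)

context ThSumA
begin

definition memG :: "('e1 + nat) set \<Rightarrow> 'e2 set \<Rightarrow> ((('e1 + 'e2) + 'e1 \<times> bool) + nat) \<Rightarrow> bool" where
  "memG M N x = (case x of Inl (Inl (Inl g)) \<Rightarrow> Inl g \<in> M | Inl (Inl (Inr k)) \<Rightarrow> k \<in> N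
     | Inl (Inr d) \<Rightarrow> Inl (fst d) \<in> M | Inr i \<Rightarrow> Inr i \<in> M)"

definition liftM :: "('e1 + nat) set \<Rightarrow> 'e2 set \<Rightarrow> ((('e1 + 'e2) + 'e1 \<times> bool) + nat) set" where
  "liftM M N = {x \<in> edges Gu. memG M N x}"

lemma memG_eps: "memG M N (Inl (epsH g)) = (Inl g \<in> M)"
  by (simp add: epsH_def memG_def)

lemma memG_Phi:
  assumes "a \<in> darts_at Hu w" "w \<noteq> Inl u'"
  shows "memG M N (fst (Phi phiH a)) = (fst a \<in> M)"
proof -
  obtain x b where a: "a = (x, b)" by (cases a)
  show ?thesis
  proof (cases x)
    case (Inl g) then show ?thesis using fst_Phi_H[of g b w] assms a memG_eps by simp
  next
    case (Inr i) then show ?thesis using a by (simp add: Phi_def memG_def)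
  qed
qed

lemma memG_K: "memG M N (fst ((Lft \<circ> phiK) (k, b))) =
    (if endp K k (\<not> b) = v' then Inl (fst (sinv (k, \<not> b))) \<in> M else k \<in> N)"
  by (simp add: Lft_def phiK_def memG_def)

lemma lift_pm:
  assumes M: "perfect_matching Hu M" and N: "perfect_matching K N"
    and eq: "\<And>d. d \<in> D \<Longrightarrow> Inl (fst d) \<in> M \<longleftrightarrow> fst (\<sigma> d) \<in> N"
  shows "perfect_matching Gu (liftM M N)"
  unfolding perfect_matching_def
proof (intro conjI ballI)
  show "liftM M N \<subseteq> edges Gu" by (auto simp: liftM_def)
  fix w assume w: "w \<in> verts Gu"
  have memL: "fst d \<in> liftM M N \<longleftrightarrow> memG M N (fst d)" if "d \<in> darts_at Gu w" for d
    using dart_in_edges'[OF that] by (simp add: liftM_def)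
  from w show "card {d \<in> darts_at Gu w. fst d \<in> liftM M N} = 1"
  proof (cases rule: verts_Gu_cases)
    case (H x)
    have "card {a \<in> darts_at Hu (Inl x). fst a \<in> M} = card {d \<in> darts_at Gu w. fst d \<in> liftM M N}"
    proof (rule card_transfer[OF TH[OF H(1,2,3)], unfolded H(4)[symmetric]])
      fix a assume a: "a \<in> darts_at Hu (Inl x)"
      then have "Phi phiH a \<in> darts_at Gu w" using TH[OF H(1,2,3)] H(4) by (auto simp: bij_betw_def)
      then show "fst a \<in> M \<longleftrightarrow> fst (Phi phiH a) \<in> liftM M N"
        using memL memG_Phi[OF a] H(2) by simp
    qed
    moreover have "Inl x \<in> verts Hu" using H by auto
    then have "card {a \<in> darts_at Hu (Inl x). fst a \<in> M} = 1" using M unfolding perfect_matching_def by blast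
    ultimately show ?thesis by simp
  next
    case (T j)
    have "card {a \<in> darts_at Hu (Inr j). fst a \<in> M} = card {d \<in> darts_at Gu w. fst d \<in> liftM M N}"
    proof (rule card_transfer[OF TJ[OF T(1)], unfolded T(2)[symmetric]])
      fix a assume a: "a \<in> darts_at Hu (Inr j)"
      then have "Phi phiH a \<in> darts_at Gu w" using TJ[OF T(1)] T(2) by (auto simp: bij_betw_def)
      then show "fst a \<in> M \<longleftrightarrow> fst (Phi phiH a) \<in> liftM M N"
        using memL memG_Phi[OF a] by simp
    qed
    moreover have "Inr j \<in> verts Hu" using T by auto
    then have "card {a \<in> darts_at Hu (Inr j). fst a \<in> M} = 1" using M unfolding perfect_matching_def by blast
    ultimately show ?thesis by simp
  next
    case (K y)
    have "card {a \<in> darts_at K y. fst a \<in> N} = card {d \<in> darts_at Gu w. fst d \<in> liftM M N}"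
    proof (rule card_transfer[OF TK[OF K(1,2)], unfolded K(3)[symmetric]])
      fix a assume a: "a \<in> darts_at K y"
      obtain k b where kb: "a = (k, b)" by (cases a)
      have "(Lft \<circ> phiK) a \<in> darts_at Gu w" using a TK[OF K(1,2)] K(3) by (auto simp: bij_betw_def)
      then have 1: "fst ((Lft \<circ> phiK) a) \<in> liftM M N \<longleftrightarrow> memG M N (fst ((Lft \<circ> phiK) a))" using memL by blast
      have "k \<in> N \<longleftrightarrow> memG M N (fst ((Lft \<circ> phiK) (k, b)))"
      proof (cases "endp K k (\<not> b) = v'")
        case True
        have "k \<in> edges K" using a kb by (simp add: darts_at_def)
        then have kd: "(k, \<not> b) \<in> darts_at K v'" using True by (simp add: darts_at_def)
        then have "sinv (k, \<not> b) \<in> D" "\<sigma> (sinv (k, \<not> b)) = (k, \<not> b)" using sinv_in sig_sinv by auto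
        then have "Inl (fst (sinv (k, \<not> b))) \<in> M \<longleftrightarrow> k \<in> N" using eq by fastforce
        then show ?thesis using True memG_K by simp
      next
        case False then show ?thesis using memG_K by simp
      qed
      then show "fst a \<in> N \<longleftrightarrow> fst ((Lft \<circ> phiK) a) \<in> liftM M N" using 1 kb by simp
    qed
    moreover have "card {a \<in> darts_at K y. fst a \<in> N} = 1" using N K(1) unfolding perfect_matching_def by blast
    ultimately show ?thesis by simp
  qed
qed

lemma edges_Gu_cases:
  assumes "x \<in> edges Gu"
  obtains (H) g where "g \<in> EH'" "x = Inl (Inl (Inl g))"
    | (K) k where "k \<in> EK'" "x = Inl (Inl (Inr k))"
    | (N) d where "d \<in> D" "x = Inl (Inr d)"
    | (T) i where "i \<in> {0, 1, 2}" "x = Inr i"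
  using assms by auto

lemma pmiGu: "pmi Gu = 4"
proof (rule antisym)
  show "4 \<le> pmi Gu"
  proof -
    have "4 \<le> card S" if "pmcover Gu S" for S
    proof (rule ccontr)
      assume "\<not> 4 \<le> card S"
      then have "card S \<le> 3" by simp
      then show False using cover_colourable[OF that] nocolGu by blast
    qed
    then have "enat 4 \<le> pmi Gu" by (rule pmi_ge)
    then show ?thesis by (simp add: numeral_eq_enat)
  qed
next
  have "pmi Hu = enat 4" using pmiH by (simp add: numeral_eq_enat)
  then obtain SH where SH: "pmcover Hu SH" "card SH = 4" using pmi_attained by blast
  have SHpm: "\<And>M. M \<in> SH \<Longrightarrow> perfect_matching Hu M" and SHu: "\<Union>SH = edges Hu" and SHf: "finite SH"
    using SH(1) by (auto simp: pmcover_def)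
  have u'Hu: "Inl u' \<in> verts Hu" using u' uu' by simp
  have LD: "Lft d \<in> darts_at Hu (Inl u')" if "d \<in> D" for d using that darts_Hu_u' by simp
  have uniq: "d1 = d2" if "M \<in> SH" "d1 \<in> D" "d2 \<in> D" "Inl (fst d1) \<in> M" "Inl (fst d2) \<in> M" for M d1 d2
  proof -
    have "Lft d1 = Lft d2" using pm_two_darts[OF SHpm[OF that(1)] u'Hu LD[OF that(2)] LD[OF that(3)]] that(4,5)
      by (simp add: Lft_def)
    then show ?thesis by (simp add: Lft_def prod_eq_iff)
  qed
  have ex: "\<exists>d\<in>D. Inl (fst d) \<in> M" if "M \<in> SH" for M
  proof -
    have "card {a \<in> darts_at Hu (Inl u'). fst a \<in> M} = 1" using SHpm[OF that] u'Hu
      unfolding perfect_matching_def by blast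
    then obtain a where "a \<in> darts_at Hu (Inl u')" "fst a \<in> M" by (metis (no_types, lifting) card_1_singletonE insertI1 mem_Collect_eq)
    then obtain d where "d \<in> D" "a = Lft d" using darts_Hu_u' by auto
    then show ?thesis using \<open>fst a \<in> M\<close> by (auto simp: Lft_def)
  qed
  define dM where "dM M = (SOME d. d \<in> D \<and> Inl (fst d) \<in> M)" for M :: "('e1 + nat) set"
  have dM: "dM M \<in> D" "Inl (fst (dM M)) \<in> M" if "M \<in> SH" for M
    using someI_ex[of "\<lambda>d. d \<in> D \<and> Inl (fst d) \<in> M"] ex[OF that] unfolding dM_def by blast+
  have dM_eq: "dM M = d" if "M \<in> SH" "d \<in> D" "Inl (fst d) \<in> M" for M d
    using uniq[OF that(1) dM(1)[OF that(1)] that(2) dM(2)[OF that(1)] that(3)] .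
  define \<alpha> where "\<alpha> M = cK (fst (\<sigma> (dM M)))" for M :: "('e1 + nat) set"
  define NK where "NK j = {k \<in> edges K. cK k = j}" for j
  define SG where "SG = (\<lambda>M. liftM M (NK (\<alpha> M))) ` SH"
  have injv: "inj_on (\<lambda>d. cK (fst d)) (darts_at K v')" using colK v' by (simp add: colouring_def)
  have sig_inj: "inj_on \<sigma> D" using sig by (simp add: bij_betw_def)
  have fsE: "fst (\<sigma> d) \<in> edges K" if "d \<in> D" for d using dart_in_edges'[OF sig_in[OF that]] .
  have a3: "\<alpha> M < 3" if "M \<in> SH" for M
    using colK fsE[OF dM(1)[OF that]] unfolding \<alpha>_def colouring_def by blast
  have NKpm: "perfect_matching K (NK j)" if "j < 3" for j
    unfolding NK_def using colour_class_pm[OF cubK colK that] .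
  have aeq: "Inl (fst d) \<in> M \<longleftrightarrow> fst (\<sigma> d) \<in> NK (\<alpha> M)" if "M \<in> SH" "d \<in> D" for M d
  proof
    assume "Inl (fst d) \<in> M"
    then have "dM M = d" using dM_eq that by blast
    then show "fst (\<sigma> d) \<in> NK (\<alpha> M)" using fsE[OF that(2)] by (simp add: NK_def \<alpha>_def)
  next
    assume "fst (\<sigma> d) \<in> NK (\<alpha> M)"
    then have "cK (fst (\<sigma> d)) = cK (fst (\<sigma> (dM M)))" by (simp add: NK_def \<alpha>_def)
    then have "\<sigma> d = \<sigma> (dM M)" using inj_onD[OF injv _ sig_in[OF that(2)] sig_in[OF dM(1)[OF that(1)]]] by simp
    then have "d = dM M" using inj_onD[OF sig_inj _ that(2) dM(1)[OF that(1)]] by simp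
    then show "Inl (fst d) \<in> M" using dM(2)[OF that(1)] by simp
  qed
  have cov: "pmcover Gu SG" unfolding pmcover_def
  proof (intro conjI ballI)
    show "finite SG" using SHf by (simp add: SG_def)
    fix M' assume "M' \<in> SG"
    then obtain M where M: "M \<in> SH" "M' = liftM M (NK (\<alpha> M))" by (auto simp: SG_def)
    then show "perfect_matching Gu M'" using lift_pm[OF SHpm[OF M(1)] NKpm[OF a3[OF M(1)]] aeq[OF M(1)]] by simp
  next
    show "\<Union>SG = edges Gu"
    proof
      show "\<Union>SG \<subseteq> edges Gu" by (auto simp: SG_def liftM_def)
      show "edges Gu \<subseteq> \<Union>SG"
      proof
        fix x assume x: "x \<in> edges Gu"
        have inSG: "x \<in> \<Union>SG" if "M \<in> SH" "memG M (NK (\<alpha> M)) x" for M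
          using that x unfolding SG_def liftM_def by blast
        from x show "x \<in> \<Union>SG"
        proof (cases rule: edges_Gu_cases)
          case (H g)
          then have "Inl g \<in> edges Hu" by simp
          then obtain M where "M \<in> SH" "Inl g \<in> M" using SHu by blast
          then show ?thesis using inSG H(2) by (simp add: memG_def)
        next
          case (T i)
          then have "Inr i \<in> edges Hu" by auto
          then obtain M where "M \<in> SH" "Inr i \<in> M" using SHu by blast
          then show ?thesis using inSG T(2) by (simp add: memG_def)
        next
          case (N d)
          then have "Inl (fst d) \<in> edges Hu" using dart_in_edges'[OF N(1)] by simp
          then obtain M where "M \<in> SH" "Inl (fst d) \<in> M" using SHu by blast
          then show ?thesis using inSG N(2) by (simp add: memG_def)
        next
          case (K k)
          have t3: "cK k < 3" using colK K(1) unfolding colouring_def by blast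
          then have "cK k \<in> (\<lambda>d. cK (fst d)) ` darts_at K v'" using colour_image[OF cubK colK v'] by auto
          then obtain e' where e': "e' \<in> darts_at K v'" "cK (fst e') = cK k" by (metis (no_types, lifting) imageE)
          define d where "d = sinv e'"
          have d: "d \<in> D" "\<sigma> d = e'" using e' sinv_in sig_sinv by (auto simp: d_def)
          then have "Inl (fst d) \<in> edges Hu" using dart_in_edges'[OF d(1)] by simp
          then obtain M where M: "M \<in> SH" "Inl (fst d) \<in> M" using SHu by blast
          then have "\<alpha> M = cK k" using dM_eq[OF M(1) d(1) M(2)] d e' by (simp add: \<alpha>_def)
          then have "k \<in> NK (\<alpha> M)" using K(1) by (simp add: NK_def)
          then show ?thesis using inSG[OF M(1)] K(2) by (simp add: memG_def)
        qed
      qed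
    qed
  qed
  have "card SG \<le> 4" using SH(2) unfolding SG_def by (metis card_image_le[OF SHf])
  then have "pmi Gu \<le> enat 4" using pmi_le[OF cov] by (meson enat_ord_simps(1) order_trans)
  then show "pmi Gu \<le> 4" by (simp add: numeral_eq_enat)
qed

lemma apexG: "apex G (Inl u)"
proof -
  have "\<not> three_edge_colourable G"
  proof
    assume "three_edge_colourable G"
    then obtain c where "colouring G c" by (auto simp: tec_iff)
    then have "three_edge_colourable Gu" using colour_inflate[OF cubG fGb _ uG] by blast
    then show False using nocolGu by simp
  qed
  then have "snark G" using wfG cubG tcG by (simp add: snark_def)
  then show ?thesis unfolding apex_def using uG fGb pmiGu by blast
qed

end


theorem lemma6p6:
  fixes H :: "('v1, 'e1) mgraph" and K :: "('v2, 'e2) mgraph" and u :: 'v1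
  assumes "snark H"
    and "pmi H \<ge> 5"
    and "wf_graph K" and "cubic K" and "two_connected K"
    and "three_edge_colourable K"
    and "apex H u"
  shows "(\<forall>e f p. e \<in> edges H \<longrightarrow> f \<in> edges K \<longrightarrow>
            apex (two_sum H K e f p) (Inl u))
       \<and> (\<forall>u' v' \<sigma>. u' \<in> verts H \<longrightarrow> v' \<in> verts K \<longrightarrow>
            bij_betw \<sigma> (darts_at H u') (darts_at K v') \<longrightarrow> u \<noteq> u' \<longrightarrow>
            apex (three_sum H K u' v' \<sigma>) (Inl u))"
proof -
  have wfH: "wf_graph H" and cubH: "cubic H" and tcH: "two_connected H"
    using assms(1) by (simp_all add: snark_def)
  have wfK: "wf_graph K" and cubK: "cubic K" and tcK: "two_connected K" using assms(3-5) by simp_all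
  have u: "u \<in> verts H" using assms(7) by (simp add: apex_def)
  obtain fH where fH: "bij_betw fH (darts_at H u) {0, 1, 2}" and pmiH: "pmi (inflate H u fH) = 4"
    using assms(7) unfolding apex_def by blast
  obtain cK where colK: "colouring K cK" using assms(6) by (auto simp: tec_iff)
  show ?thesis
  proof (intro conjI allI impI)
    fix e f p assume e: "e \<in> edges H" and f: "f \<in> edges K"
    interpret A: TSumA H K e f p u fH cK
      by unfold_locales (simp_all only: wfH cubH tcH wfK cubK tcK e f u fH pmiH colK)
    show "apex (two_sum H K e f p) (Inl u)" by (rule A.apexG)
  next
    fix u' v' \<sigma>
    assume u': "u' \<in> verts H" and v': "v' \<in> verts K"
      and sig: "bij_betw \<sigma> (darts_at H u') (darts_at K v')" and uu': "u \<noteq> u'"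
    interpret B: ThSumA H K u' v' \<sigma> u fH cK
      by unfold_locales (simp_all only: not_False_eq_True wfH cubH tcH wfK cubK tcK u' v' sig u uu' fH pmiH colK)
    show "apex (three_sum H K u' v' \<sigma>) (Inl u)" by (rule B.apexG)
  qed
qed

end
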